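(* Let $(\varphi,\Theta)$ be a linear discrete co-cycle generated by $A:\mathbb Z\times\Omega\to\mathcal L(X)$ admitting an exponential dichotomy with bound $K$ and exponent $\alpha$ on the full-measure $\theta$-invariant set $\tilde\Omega$. There exists a $\Theta$-invariant map $\delta$ with $0<\delta(\omega_p)<\frac{1-e^{-\alpha(\omega_p)}}{1+e^{-\alpha(\omega_p)}}$ such that, if $B:\mathbb Z\times\Omega\to\mathcal L(X)$ satisfies $\|B(\Theta_k\omega_p)\|_{\mathcal L(X)}\le\delta(\omega_p)K(\omega_p)^{-1}$ for all $k\in\mathbb Z$ and $(\psi,\Theta)$ denotes the discrete co-cycle generated by $A+B$, then for every $\omega_p\in\mathbb Z\times\tilde\Omega$ the sets $$V^+(\omega_p):=\{z\in X:\sup_{n\ge0}\|\psi(n,\omega_p)z\|_X<\infty\},$$ $$V^-(\omega_p):=\{z\in X:\text{there is a backwards bounded solution of }\Psi_{\omega_p}\text{ through }z\}$$ are closed subspaces with $X=V^+(\omega_p)\oplus V^-(\omega_p)$; moreover, for every $n\ge0$, $\psi(n,\omega_p)V^+(\omega_p)\subset V^+(\Theta_n\omega_p)$, $\psi(n,\omega_p)V^-(\omega_p)=V^-(\Theta_n\omega_p)$, and $\psi(n,\omega_p)|_{V^-(\omega_p)}:V^-(\omega_p)\to V^-(\Theta_n\omega_p)$ is an isomorphism.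
   Context: $X$ is a Banach space, $\mathcal L(X)$ the bounded linear operators on $X$, $(\Omega,\mathcal F,\mathbb P)$ a probability space, $\mathbb T\in\{\mathbb Z,\mathbb R\}$, $\mathbb T^+=\{t\in\mathbb T:t\ge0\}$. A random flow is a family of measurable maps $\theta_t:\Omega\to\Omega$, $t\in\mathbb T$, with $\theta_0=\mathrm{Id}_\Omega$ and $\theta_{t+s}=\theta_t\circ\theta_s$. For $\omega_\tau:=(\tau,\omega)\in\mathbb T\times\Omega$ put $\Theta_t\omega_\tau:=(t+\tau,\theta_t\omega)$. A map $D$ on $\mathbb T\times\Omega$ is $\Theta$-invariant if $D(\Theta_t\omega_\tau)=D(\omega_\tau)$ for all $t,\omega_\tau$; a set $\tilde\Omega\subset\Omega$ is $\theta$-invariant if $\theta_t\tilde\Omega=\tilde\Omega$ for all $t$. A linear co-cycle $(\varphi,\Theta)$ is a family $\varphi(t,\omega_\tau)\in\mathcal L(X)$, $t\in\mathbb T^+$, $\omega_\tau\in\mathbb T\times\Omega$, with $(t,\omega,x)\mapsto\varphi(t,\tau,\omega)x$ measurable for each $\tau$, $\varphi(0,\omega_\tau)=\mathrm{Id}_X$ and $\varphi(t+s,\omega_\tau)=\varphi(t,\Theta_s\omega_\tau)\varphi(s,\omega_\tau)$ for $t,s\in\mathbb T^+$. In the discrete case, $(\varphi,\Theta)$ is generated by $A:\mathbb Z\times\Omega\to\mathcal L(X)$ if $\varphi(n,\omega_p)=A(\Theta_{n-1}\omega_p)\circ\cdots\circ A(\omega_p)$ for $n\ge1$. For a co-cycle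 $\psi$ and fixed $\omega_p$, $\Psi_{\omega_p}$ is the evolution process $\psi_{n,m}(\omega_p):=\psi(n-m,\Theta_m\omega_p)$, $n\ge m$; a backwards bounded solution of $\Psi_{\omega_p}$ through $z$ is a sequence $\{\xi(n)\}_{n\le0}$ with $\xi(0)=z$, $\xi(n)=\psi_{n,m}(\omega_p)\xi(m)$ for $m\le n\le0$, and $\sup_{n\le0}\|\xi(n)\|_X<\infty$. Exponential dichotomy: $(\varphi,\Theta)$ admits an exponential dichotomy with bound $K$, exponent $\alpha$ and projections $\Pi^s$ if there are a $\theta$-invariant $\tilde\Omega\subset\Omega$ with $\mathbb P(\tilde\Omega)=1$, projections $\Pi^s(\omega_\tau)\in\mathcal L(X)$ for $\omega_\tau\in\mathbb T\times\tilde\Omega$ (with $\Pi^u:=\mathrm{Id}_X-\Pi^s$) and $\Theta$-invariant maps $K:\mathbb T\times\Omega\to[1,\infty)$, $\alpha:\mathbb T\times\Omega\to(0,\infty)$ such that for all $\omega_\tau\in\mathbb T\times\tilde\Omega$: (i) for each $\tau$ and $x\in X$, $\omega\mapsto\Pi^s(\tau,\omega)x$ is measurable; (ii) $\Pi^s(\Theta_t\omega_\tau)\varphi(t,\omega_\tau)=\varphi(t,\omega_\tau)\Pi^s(\omega_\tau)$ for $t\in\mathbb T^+$; (iii) for $t\in\mathbb T^+$, $\varphi(t,\omega_\tau)$ maps $R(\Pi^u(\omega_\tau))$ isomorphically onto $R(\Pi^u(\Theta_t\omega_\tau))$; (iv) $\|\varphi(t,\omega_\tau)\Pi^s(\omega_\tau)\|\le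 K(\omega_\tau)e^{-\alpha(\omega_\tau)t}$ for $t\in\mathbb T^+$ and $\|\varphi(t,\omega_\tau)\Pi^u(\omega_\tau)\|\le K(\omega_\tau)e^{\alpha(\omega_\tau)t}$ for $t\in\mathbb T$, $t\le0$, where for $t<0$, $\varphi(t,\omega_\tau)\Pi^u(\omega_\tau)$ means the inverse of $\varphi(-t,\Theta_t\omega_\tau)|_{R(\Pi^u(\Theta_t\omega_\tau))}$ applied after $\Pi^u(\omega_\tau)$. It is called discrete if $\mathbb T=\mathbb Z$ and continuous if $\mathbb T=\mathbb R$. *)

theory Defs
  imports "HOL-Probability.Probability"
begin

(* Discrete setting: time set T = Z, nonnegative times T+ are represented by nat. *)

definition random_flow :: "'w measure \<Rightarrow> (int \<Rightarrow> 'w \<Rightarrow> 'w) \<Rightarrow> bool" where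
  "random_flow M \<theta> \<longleftrightarrow>
     (\<forall>t. \<theta> t \<in> M \<rightarrow>\<^sub>M M) \<and> \<theta> 0 = id \<and> (\<forall>t s. \<theta> (t + s) = \<theta> t \<circ> \<theta> s)"

definition Theta :: "(int \<Rightarrow> 'w \<Rightarrow> 'w) \<Rightarrow> int \<Rightarrow> int \<times> 'w \<Rightarrow> int \<times> 'w" where
  "Theta \<theta> t \<omega>\<tau> = (t + fst \<omega>\<tau>, \<theta> t (snd \<omega>\<tau>))"

definition Theta_invariant :: "(int \<Rightarrow> 'w \<Rightarrow> 'w) \<Rightarrow> (int \<times> 'w \<Rightarrow> 'b) \<Rightarrow> bool" where
  "Theta_invariant \<theta> D \<longleftrightarrow> (\<forall>t \<omega>\<tau>. D (Theta \<theta> t \<omega>\<tau>) = D \<omega>\<tau>)"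

definition theta_invariant_set :: "(int \<Rightarrow> 'w \<Rightarrow> 'w) \<Rightarrow> 'w set \<Rightarrow> bool" where
  "theta_invariant_set \<theta> S \<longleftrightarrow> (\<forall>t. \<theta> t ` S = S)"

definition linear_cocycle ::
  "'w measure \<Rightarrow> (int \<Rightarrow> 'w \<Rightarrow> 'w) \<Rightarrow> (nat \<Rightarrow> int \<times> 'w \<Rightarrow> ('x::banach \<Rightarrow>\<^sub>L 'x)) \<Rightarrow> bool" where
  "linear_cocycle M \<theta> \<phi> \<longleftrightarrow>
     (\<forall>\<tau>. (\<lambda>(t, \<omega>, x). blinfun_apply (\<phi> t (\<tau>, \<omega>)) x)
            \<in> borel_measurable (count_space UNIV \<Otimes>\<^sub>M M \<Otimes>\<^sub>M borel)) \<and>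
     (\<forall>\<omega>\<tau>. \<phi> 0 \<omega>\<tau> = id_blinfun) \<and>
     (\<forall>t s \<omega>\<tau>. \<phi> (t + s) \<omega>\<tau> = \<phi> t (Theta \<theta> (int s) \<omega>\<tau>) o\<^sub>L \<phi> s \<omega>\<tau>)"

fun gen_by :: "(int \<Rightarrow> 'w \<Rightarrow> 'w) \<Rightarrow> (int \<times> 'w \<Rightarrow> ('x::real_normed_vector \<Rightarrow>\<^sub>L 'x))
                \<Rightarrow> nat \<Rightarrow> int \<times> 'w \<Rightarrow> ('x \<Rightarrow>\<^sub>L 'x)" where
  "gen_by \<theta> A 0 \<omega>p = id_blinfun"
| "gen_by \<theta> A (Suc n) \<omega>p = A (Theta \<theta> (int n) \<omega>p) o\<^sub>L gen_by \<theta> A n \<omega>p"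

definition generated_by ::
  "(int \<Rightarrow> 'w \<Rightarrow> 'w) \<Rightarrow> (int \<times> 'w \<Rightarrow> ('x::real_normed_vector \<Rightarrow>\<^sub>L 'x))
     \<Rightarrow> (nat \<Rightarrow> int \<times> 'w \<Rightarrow> ('x \<Rightarrow>\<^sub>L 'x)) \<Rightarrow> bool" where
  "generated_by \<theta> A \<phi> \<longleftrightarrow> (\<forall>n \<omega>p. n \<ge> 1 \<longrightarrow> \<phi> n \<omega>p = gen_by \<theta> A n \<omega>p)"

definition iso_between :: "('x::real_normed_vector \<Rightarrow>\<^sub>L 'x) \<Rightarrow> 'x set \<Rightarrow> 'x set \<Rightarrow> bool" where
  "iso_between T U V \<longleftrightarrow> bij_betw (blinfun_apply T) U V \<and> continuous_on V (inv_into U (blinfun_apply T))"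

(* For t = -n < 0, phi(t,\<omega>p) Pi^u(\<omega>p) is the inverse of
  phi(n, Theta_(-n) \<omega>p) restricted to R(Pi^u(Theta_(-n) \<omega>p)), applied after Pi^u(\<omega>p);
  its operator-norm bound is written out pointwise. *)
definition exp_dichotomy ::
  "'w measure \<Rightarrow> (int \<Rightarrow> 'w \<Rightarrow> 'w) \<Rightarrow> (nat \<Rightarrow> int \<times> 'w \<Rightarrow> ('x::banach \<Rightarrow>\<^sub>L 'x))
    \<Rightarrow> (int \<times> 'w \<Rightarrow> real) \<Rightarrow> (int \<times> 'w \<Rightarrow> real) \<Rightarrow> 'w set
    \<Rightarrow> (int \<times> 'w \<Rightarrow> ('x \<Rightarrow>\<^sub>L 'x)) \<Rightarrow> bool" where
  "exp_dichotomy M \<theta> \<phi> K \<alpha> Om Pis \<longleftrightarrow>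
     theta_invariant_set \<theta> Om \<and> Om \<subseteq> space M \<and> Om \<in> sets M \<and> emeasure M Om = 1 \<and>
     Theta_invariant \<theta> K \<and> Theta_invariant \<theta> \<alpha> \<and> (\<forall>\<omega>\<tau>. K \<omega>\<tau> \<ge> 1 \<and> \<alpha> \<omega>\<tau> > 0) \<and>
     (\<forall>\<omega>\<tau>. snd \<omega>\<tau> \<in> Om \<longrightarrow> Pis \<omega>\<tau> o\<^sub>L Pis \<omega>\<tau> = Pis \<omega>\<tau>) \<and>
     (\<forall>\<tau> x. (\<lambda>\<omega>. blinfun_apply (Pis (\<tau>, \<omega>)) x) \<in> borel_measurable (restrict_space M Om)) \<and>
     (\<forall>\<omega>\<tau> t. snd \<omega>\<tau> \<in> Om \<longrightarrow>
        Pis (Theta \<theta> (int t) \<omega>\<tau>) o\<^sub>L \<phi> t \<omega>\<tau> = \<phi> t \<omega>\<tau> o\<^sub>L Pis \<omega>\<tau>) \<and>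
     (\<forall>\<omega>\<tau> t. snd \<omega>\<tau> \<in> Om \<longrightarrow>
        iso_between (\<phi> t \<omega>\<tau>) (range (blinfun_apply (id_blinfun - Pis \<omega>\<tau>)))
          (range (blinfun_apply (id_blinfun - Pis (Theta \<theta> (int t) \<omega>\<tau>))))) \<and>
     (\<forall>\<omega>\<tau> t. snd \<omega>\<tau> \<in> Om \<longrightarrow>
        norm (\<phi> t \<omega>\<tau> o\<^sub>L Pis \<omega>\<tau>) \<le> K \<omega>\<tau> * exp (- \<alpha> \<omega>\<tau> * real t)) \<and>
     (\<forall>\<omega>\<tau> n x. snd \<omega>\<tau> \<in> Om \<longrightarrow>
        norm (inv_into (range (blinfun_apply (id_blinfun - Pis (Theta \<theta> (- int n) \<omega>\<tau>))))
                 (blinfun_apply (\<phi> n (Theta \<theta> (- int n) \<omega>\<tau>)))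
                 (blinfun_apply (id_blinfun - Pis \<omega>\<tau>) x))
          \<le> K \<omega>\<tau> * exp (\<alpha> \<omega>\<tau> * (- real n)) * norm x)"

(* Backwards bounded solution of the evolution process psi_(n,m)(\<omega>p) = psi(n-m, Theta_m \<omega>p). *)
definition backwards_bounded_solution ::
  "(int \<Rightarrow> 'w \<Rightarrow> 'w) \<Rightarrow> (nat \<Rightarrow> int \<times> 'w \<Rightarrow> ('x::real_normed_vector \<Rightarrow>\<^sub>L 'x))
     \<Rightarrow> int \<times> 'w \<Rightarrow> 'x \<Rightarrow> (int \<Rightarrow> 'x) \<Rightarrow> bool" where
  "backwards_bounded_solution \<theta> \<psi> \<omega>p z \<xi> \<longleftrightarrow>
     \<xi> 0 = z \<and>
     (\<forall>m n. m \<le> n \<and> n \<le> 0 \<longrightarrow> \<xi> n = blinfun_apply (\<psi> (nat (n - m)) (Theta \<theta> m \<omega>p)) (\<xi> m)) \<and>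
     (\<exists>C. \<forall>n \<le> 0. norm (\<xi> n) \<le> C)"

definition Vplus :: "(nat \<Rightarrow> int \<times> 'w \<Rightarrow> ('x::real_normed_vector \<Rightarrow>\<^sub>L 'x)) \<Rightarrow> int \<times> 'w \<Rightarrow> 'x set" where
  "Vplus \<psi> \<omega>p = {z. \<exists>C. \<forall>n. norm (blinfun_apply (\<psi> n \<omega>p) z) \<le> C}"

definition Vminus :: "(int \<Rightarrow> 'w \<Rightarrow> 'w) \<Rightarrow> (nat \<Rightarrow> int \<times> 'w \<Rightarrow> ('x::real_normed_vector \<Rightarrow>\<^sub>L 'x))
     \<Rightarrow> int \<times> 'w \<Rightarrow> 'x set" where
  "Vminus \<theta> \<psi> \<omega>p = {z. \<exists>\<xi>. backwards_bounded_solution \<theta> \<psi> \<omega>p z \<xi>}"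

definition direct_sum :: "'x::real_vector set \<Rightarrow> 'x set \<Rightarrow> bool" where
  "direct_sum U V \<longleftrightarrow> U \<inter> V = {0} \<and> (\<forall>x. \<exists>u\<in>U. \<exists>v\<in>V. x = u + v)"

end

theory Submission
  imports Defs
begin


fun ev :: "(int \<Rightarrow> 'x::real_normed_vector \<Rightarrow>\<^sub>L 'x) \<Rightarrow> int \<Rightarrow> nat \<Rightarrow> 'x \<Rightarrow>\<^sub>L 'x" where
  "ev A m 0 = id_blinfun"
| "ev A m (Suc t) = A (m + int t) o\<^sub>L ev A m t"

lemma ev_add: "ev A m (t + s) = ev A (m + int s) t o\<^sub>L ev A m s"
proof (induction t)
  case (Suc t) show ?case by (rule blinfun_eqI) (simp add: Suc[unfolded add.commute[of t]] add.commute add.left_commute)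
qed (rule blinfun_eqI, simp)

lemma ev_add_apply: "blinfun_apply (ev A m (t + s)) x = blinfun_apply (ev A (m + int s) t) (blinfun_apply (ev A m s) x)"
  by (simp add: ev_add)

lemma ev_1: "blinfun_apply (ev A m (Suc 0)) x = blinfun_apply (A m) x" by simp

locale dich =
  fixes A :: "int \<Rightarrow> 'x::banach \<Rightarrow>\<^sub>L 'x" and P :: "int \<Rightarrow> 'x \<Rightarrow>\<^sub>L 'x" and K a :: real
  assumes K1: "K \<ge> 1" and apos: "a > 0"
  and idem: "\<And>m. P m o\<^sub>L P m = P m"
  and comm: "\<And>m t. P (m + int t) o\<^sub>L ev A m t = ev A m t o\<^sub>L P m"
  and bij: "\<And>m t. bij_betw (blinfun_apply (ev A m t)) (range (blinfun_apply (id_blinfun - P m)))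
               (range (blinfun_apply (id_blinfun - P (m + int t))))"
  and stab: "\<And>m t. norm (ev A m t o\<^sub>L P m) \<le> K * exp (- a * real t)"
  and unst: "\<And>m t x. norm (inv_into (range (blinfun_apply (id_blinfun - P m))) (blinfun_apply (ev A m t))
               (blinfun_apply (id_blinfun - P (m + int t)) x)) \<le> K * exp (- a * real t) * norm x"
begin

abbreviation Q where "Q m \<equiv> blinfun_apply (id_blinfun - P m)"
abbreviation Pa where "Pa m \<equiv> blinfun_apply (P m)"
abbreviation E where "E m t \<equiv> blinfun_apply (ev A m t)"

lemma PP: "Pa m (Pa m x) = Pa m x"
proof -
  have "blinfun_apply (P m o\<^sub>L P m) x = blinfun_apply (P m) x" using idem by simp
  then show ?thesis by simp
qed
lemma Q_def': "Q m x = x - Pa m x" by (simp add: minus_blinfun.rep_eq)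
lemma QQ: "Q m (Q m x) = Q m x" by (simp add: Q_def' blinfun.diff_right PP)
lemma PQ: "Pa m (Q m x) = 0" by (simp add: Q_def' blinfun.diff_right PP)
lemma QP: "Q m (Pa m x) = 0" by (simp add: Q_def' PP)
lemma PQsum: "Pa m x + Q m x = x" by (simp add: Q_def')
lemma Q_range: "y \<in> range (Q m) \<longleftrightarrow> Q m y = y"
proof
  assume "y \<in> range (Q m)" then obtain z where "y = Q m z" by auto
  then show "Q m y = y" using QQ by simp
next
  assume "Q m y = y" then show "y \<in> range (Q m)" by (intro range_eqI[of _ _ y]) simp
qed
lemma commP: "Pa (m + int t) (E m t x) = E m t (Pa m x)"
proof -
  have "blinfun_apply (P (m + int t) o\<^sub>L ev A m t) x = blinfun_apply (ev A m t o\<^sub>L P m) x" using comm by simp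
  then show ?thesis by simp
qed
lemma commQ: "Q (m + int t) (E m t x) = E m t (Q m x)"
  by (simp add: Q_def' commP blinfun.diff_right)

definition U where "U m t x = inv_into (range (Q m)) (E m t) (Q (m + int t) x)"

lemma U_range: "U m t x \<in> range (Q m)"
  and U_ev: "E m t (U m t x) = Q (m + int t) x"
proof -
  have "Q (m + int t) x \<in> E m t ` range (Q m)" using bij[of m t] by (auto simp: bij_betw_def)
  then show "U m t x \<in> range (Q m)" "E m t (U m t x) = Q (m + int t) x"
    unfolding U_def by (auto intro: inv_into_into f_inv_into_f)
qed

lemma E_inj: "y1 \<in> range (Q m) \<Longrightarrow> y2 \<in> range (Q m) \<Longrightarrow> E m t y1 = E m t y2 \<Longrightarrow> y1 = y2"
  using bij[of m t] by (auto simp: bij_betw_def inj_on_def)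

lemma U_unique: "y \<in> range (Q m) \<Longrightarrow> E m t y = Q (m + int t) x \<Longrightarrow> U m t x = y"
  using E_inj[OF U_range _ ] U_ev by metis

lemma U_bound: "norm (U m t x) \<le> K * exp (- a * real t) * norm x"
  using unst[of m t x] by (simp add: U_def)

lemma U0: "U m 0 x = Q m x"
  by (rule U_unique) (auto simp: QQ)

lemma A_U: "blinfun_apply (A m) (U m (Suc t) x) = U (m+1) t x"
proof -
  let ?y = "U m (Suc t) x"
  have y: "Q m ?y = ?y" using U_range Q_range by blast
  have "Q (m+1) (blinfun_apply (A m) ?y) = blinfun_apply (A m) ?y"
    using commQ[of m 1 ?y] y by simp
  then have r: "blinfun_apply (A m) ?y \<in> range (Q (m+1))" by (metis rangeI)
  have "E (m+1) t (blinfun_apply (A m) ?y) = E m (t + 1) ?y"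
    using ev_add_apply[of A m t 1 ?y] by simp
  also have "\<dots> = Q (m + 1 + int t) x" using U_ev[of m "Suc t" x] by (simp add: add.assoc)
  finally show ?thesis by (intro U_unique[symmetric] r) simp
qed

lemma U_diff: "U m t (x1 - x2) = U m t x1 - U m t x2"
proof (rule U_unique)
  show "U m t x1 - U m t x2 \<in> range (Q m)" using U_range Q_range
    by (metis blinfun.diff_right)
  show "E m t (U m t x1 - U m t x2) = Q (m + int t) (x1 - x2)"
    by (simp add: blinfun.diff_right U_ev)
qed

lemma U_add: "U m t (x1 + x2) = U m t x1 + U m t x2"
proof (rule U_unique)
  show "U m t x1 + U m t x2 \<in> range (Q m)" using U_range Q_range
    by (metis blinfun.add_right)
  show "E m t (U m t x1 + U m t x2) = Q (m + int t) (x1 + x2)"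
    by (simp add: blinfun.add_right U_ev)
qed

end


definition bnd :: "(int \<Rightarrow> 'x::real_normed_vector) \<Rightarrow> bool" where
  "bnd u \<longleftrightarrow> (\<exists>M. \<forall>k. norm (u k) \<le> M)"

lemma small_zero:
  fixes v :: "'x::real_normed_vector"
  assumes "\<And>t::nat. norm v \<le> C * e ^ t" "0 \<le> e" "e < 1"
  shows "v = 0"
proof -
  have "(\<lambda>t. C * e ^ t) \<longlonglongrightarrow> C * 0"
    by (intro tendsto_mult tendsto_const LIMSEQ_power_zero) (use assms in auto)
  then have "norm v \<le> 0" using assms(1) by (intro LIMSEQ_le_const[of "\<lambda>t. C * e ^ t"]) auto
  then show ?thesis by simp
qed

context dich begin

definition e where "e = exp (- a)"
definition c where "c = K * (1 + e) / (1 - e)"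

lemma e_pos: "0 < e" and e_less: "e < 1" using apos by (auto simp: e_def)

lemma exp_e: "exp (- a * real t) = e ^ t"
  unfolding e_def by (metis exp_of_nat_mult mult.commute)

lemma stab': "norm (ev A m t o\<^sub>L P m) \<le> K * e ^ t" using stab[of m t] by (simp only: exp_e)
lemma U_bound': "norm (U m t x) \<le> K * e ^ t * norm x" using U_bound[of m t x] by (simp only: exp_e)

lemma c_pos: "c > 0" using e_pos e_less K1 by (auto simp: c_def)

definition g1 where "g1 u n j = E (n - int j) j (Pa (n - int j) (u (n - int j - 1)))"
definition g2 where "g2 u n j = U n (Suc j) (u (n + int j))"
definition Gr where "Gr u n = suminf (g1 u n) - suminf (g2 u n)"

lemma g1_bound: assumes "\<And>k. norm (u k) \<le> M" shows "norm (g1 u n j) \<le> K * M * e ^ j"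
proof -
  have "g1 u n j = blinfun_apply (ev A (n - int j) j o\<^sub>L P (n - int j)) (u (n - int j - 1))"
    by (simp add: g1_def)
  also have "norm \<dots> \<le> norm (ev A (n - int j) j o\<^sub>L P (n - int j)) * norm (u (n - int j - 1))"
    by (rule norm_blinfun)
  also have "\<dots> \<le> (K * e ^ j) * M"
    using stab'[of "n - int j" j] assms[of "n - int j - 1"] K1 e_pos by (intro mult_mono) auto
  finally show ?thesis by (simp add: algebra_simps)
qed

lemma g2_bound: assumes "\<And>k. norm (u k) \<le> M" shows "norm (g2 u n j) \<le> K * M * e * e ^ j"
proof -
  have "norm (g2 u n j) \<le> K * e ^ Suc j * norm (u (n + int j))"
    unfolding g2_def using U_bound'[of n "Suc j"] by simp
  also have "\<dots> \<le> K * e ^ Suc j * M" using assms K1 e_pos by (intro mult_left_mono) auto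
  finally show ?thesis by (simp add: algebra_simps)
qed

lemma geo_sum: "summable (\<lambda>j. C * e ^ j)" "(\<Sum>j. C * e ^ j) = C / (1 - e)"
proof -
  have n: "norm e < 1" using e_pos e_less by simp
  show "summable (\<lambda>j. C * e ^ j)" by (rule summable_mult[OF summable_geometric[OF n]])
  show "(\<Sum>j. C * e ^ j) = C / (1 - e)"
    by (simp only: suminf_mult[OF summable_geometric[OF n]] suminf_geometric[OF n]) simp
qed

lemma summable_bound:
  fixes f :: "nat \<Rightarrow> 'x"
  assumes "\<And>j. norm (f j) \<le> C * e ^ j"
  shows "summable f" "norm (suminf f) \<le> C / (1 - e)"
proof -
  show "summable f"
    by (rule summable_norm_cancel, rule summable_norm_comparison_test[OF _ geo_sum(1)]) (use assms in blast)
  have "norm (suminf f) \<le> (\<Sum>j. C * e ^ j)" by (rule norm_suminf_le[OF assms geo_sum(1)])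
  then show "norm (suminf f) \<le> C / (1 - e)" using geo_sum by simp
qed

lemma g1_summable: assumes "bnd u" shows "summable (g1 u n)"
proof -
  from assms obtain M where "\<And>k. norm (u k) \<le> M" by (auto simp: bnd_def)
  from g1_bound[OF this] show ?thesis by (rule summable_bound(1))
qed
lemma g2_summable: assumes "bnd u" shows "summable (g2 u n)"
proof -
  from assms obtain M where "\<And>k. norm (u k) \<le> M" by (auto simp: bnd_def)
  from g2_bound[OF this] show ?thesis by (intro summable_bound(1)[of _ "K * M * e"]) (simp add: mult.assoc)
qed

lemma Gr_bound: assumes "\<And>k. norm (u k) \<le> M" shows "norm (Gr u n) \<le> c * M"
proof -
  have 1: "norm (suminf (g1 u n)) \<le> K * M / (1 - e)"
    using summable_bound[of "g1 u n" "K * M"] g1_bound[OF assms] by auto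
  have 2: "norm (suminf (g2 u n)) \<le> K * M * e / (1 - e)"
    using summable_bound[of "g2 u n" "K * M * e"] g2_bound[OF assms] by auto
  have "norm (Gr u n) \<le> K * M / (1 - e) + K * M * e / (1 - e)"
    unfolding Gr_def using 1 2 norm_triangle_ineq4 by (smt (verit))
  also have "\<dots> = (K * M + K * M * e) / (1 - e)" by (simp add: add_divide_distrib)
  also have "\<dots> = c * M" by (simp add: c_def algebra_simps)
  finally show ?thesis .
qed

lemma Gr_diff: assumes "bnd u1" "bnd u2" shows "Gr (\<lambda>k. u1 k - u2 k) n = Gr u1 n - Gr u2 n"
proof -
  have "g1 (\<lambda>k. u1 k - u2 k) n = (\<lambda>j. g1 u1 n j - g1 u2 n j)"
    by (auto simp: g1_def blinfun.diff_right)
  moreover have "g2 (\<lambda>k. u1 k - u2 k) n = (\<lambda>j. g2 u1 n j - g2 u2 n j)"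
    by (auto simp: g2_def U_diff)
  ultimately show ?thesis unfolding Gr_def
    using suminf_diff[OF g1_summable[OF assms(1)] g1_summable[OF assms(2)]]
      suminf_diff[OF g2_summable[OF assms(1)] g2_summable[OF assms(2)]]
    by (simp add: algebra_simps)
qed

lemma Gr_rec: assumes "bnd u" shows "Gr u (n + 1) = blinfun_apply (A n) (Gr u n) + u n"
proof -
  from assms obtain M where M: "\<And>k. norm (u k) \<le> M" by (auto simp: bnd_def)
  have s1: "summable (g1 u n)" "summable (g1 u (n+1))" using g1_summable assms by auto
  have s2: "summable (g2 u n)" "summable (g2 u (n+1))" using g2_summable assms by auto
  have "blinfun_apply (A n) (suminf (g1 u n)) = (\<Sum>j. blinfun_apply (A n) (g1 u n j))"
    by (rule bounded_linear.suminf[OF blinfun.bounded_linear_right s1(1)])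
  also have "(\<lambda>j. blinfun_apply (A n) (g1 u n j)) = (\<lambda>j. g1 u (n+1) (Suc j))"
  proof
    fix j
    have "n + 1 - int (Suc j) = n - int j" by simp
    then show "blinfun_apply (A n) (g1 u n j) = g1 u (n+1) (Suc j)"
      unfolding g1_def by simp
  qed
  also have "(\<Sum>j. g1 u (n+1) (Suc j)) = suminf (g1 u (n+1)) - g1 u (n+1) 0"
    by (rule suminf_split_head[OF s1(2)])
  also have "g1 u (n+1) 0 = Pa (n+1) (u n)" by (simp add: g1_def)
  finally have h1: "blinfun_apply (A n) (suminf (g1 u n)) = suminf (g1 u (n+1)) - Pa (n+1) (u n)" .
  define f where "f j = U (n+1) j (u (n + int j))" for j
  have fb: "norm (f j) \<le> K * M * e ^ j" for j
  proof -
    have "norm (f j) \<le> K * e ^ j * norm (u (n + int j))"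
      unfolding f_def using U_bound'[of "n+1" j] by simp
    also have "\<dots> \<le> K * e ^ j * M" using M K1 e_pos by (intro mult_left_mono) auto
    finally show ?thesis by (simp add: algebra_simps)
  qed
  have sf: "summable f" using summable_bound(1)[OF fb] .
  have "blinfun_apply (A n) (suminf (g2 u n)) = (\<Sum>j. blinfun_apply (A n) (g2 u n j))"
    by (rule bounded_linear.suminf[OF blinfun.bounded_linear_right s2(1)])
  also have "(\<lambda>j. blinfun_apply (A n) (g2 u n j)) = f"
    by (auto simp: g2_def f_def A_U)
  also have "suminf f = f 0 + (\<Sum>j. f (Suc j))" using suminf_split_head[OF sf] by simp
  also have "f 0 = Q (n+1) (u n)" unfolding f_def U0 by simp
  also have "(\<lambda>j. f (Suc j)) = g2 u (n+1)"
    by (auto simp: f_def g2_def add.commute add.left_commute)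
  finally have h2: "blinfun_apply (A n) (suminf (g2 u n)) = Q (n+1) (u n) + suminf (g2 u (n+1))" .
  have "blinfun_apply (A n) (Gr u n) = suminf (g1 u (n+1)) - Pa (n+1) (u n) - (Q (n+1) (u n) + suminf (g2 u (n+1)))"
    unfolding Gr_def by (simp add: blinfun.diff_right h1 h2)
  also have "\<dots> = Gr u (n+1) - (Pa (n+1) (u n) + Q (n+1) (u n))" by (simp add: Gr_def algebra_simps)
  also have "\<dots> = Gr u (n+1) - u n" by (simp only: PQsum)
  finally show ?thesis by simp
qed

lemma sol_ev: assumes "\<And>n. x (n + 1) = blinfun_apply (A n) (x n)"
  shows "x (m + int t) = E m t (x m)"
proof (induction t)
  case (Suc t)
  have "x (m + int (Suc t)) = x ((m + int t) + 1)" by (simp add: algebra_simps)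
  also have "\<dots> = blinfun_apply (A (m + int t)) (x (m + int t))" by (rule assms)
  finally show ?case using Suc by simp
qed simp

lemma hom_zero: assumes "bnd x" "\<And>n. x (n + 1) = blinfun_apply (A n) (x n)"
  shows "x n = 0"
proof -
  from assms obtain M where M: "\<And>k. norm (x k) \<le> M" by (auto simp: bnd_def)
  have "Pa n (x n) = 0"
  proof (rule small_zero[of _ "K * M" e])
    fix t :: nat
    have "x n = E (n - int t) t (x (n - int t))" using sol_ev[OF assms(2), of "n - int t" t] by simp
    then have "Pa n (x n) = E (n - int t) t (Pa (n - int t) (x (n - int t)))"
      using commP[of "n - int t" t] by simp
    also have "\<dots> = blinfun_apply (ev A (n - int t) t o\<^sub>L P (n - int t)) (x (n - int t))" by simp
    finally have "norm (Pa n (x n)) = norm (blinfun_apply (ev A (n - int t) t o\<^sub>L P (n - int t)) (x (n - int t)))"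
      by simp
    also have "\<dots> \<le> norm (ev A (n - int t) t o\<^sub>L P (n - int t)) * norm (x (n - int t))"
      by (rule norm_blinfun)
    also have "\<dots> \<le> (K * e ^ t) * M" using stab'[of "n - int t" t] M[of "n - int t"] K1 e_pos
      by (intro mult_mono) auto
    finally show "norm (Pa n (x n)) \<le> K * M * e ^ t" by (simp add: algebra_simps)
  qed (use e_pos e_less in auto)
  moreover have "Q n (x n) = 0"
  proof (rule small_zero[of _ "K * M" e])
    fix t :: nat
    have "U n t (x (n + int t)) = Q n (x n)"
    proof (rule U_unique)
      show "Q n (x n) \<in> range (Q n)" by simp
      show "E n t (Q n (x n)) = Q (n + int t) (x (n + int t))"
        using sol_ev[OF assms(2), of n t] commQ[of n t "x n"] by simp
    qed
    then have "norm (Q n (x n)) = norm (U n t (x (n + int t)))" by simp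
    also have "\<dots> \<le> K * e ^ t * norm (x (n + int t))" by (rule U_bound')
    also have "\<dots> \<le> K * e ^ t * M" using M K1 e_pos by (intro mult_left_mono) auto
    finally show "norm (Q n (x n)) \<le> K * M * e ^ t" by (simp add: algebra_simps)
  qed (use e_pos e_less in auto)
  ultimately show ?thesis using PQsum[of n "x n"] by simp
qed

end


lemma small_le:
  fixes x C q :: real
  assumes "\<And>t::nat. x \<le> C * q ^ t" "0 \<le> q" "q < 1"
  shows "x \<le> 0"
proof -
  have "(\<lambda>t. C * q ^ t) \<longlonglongrightarrow> C * 0"
    by (intro tendsto_mult tendsto_const LIMSEQ_power_zero) (use assms in auto)
  then show ?thesis using assms(1) by (intro LIMSEQ_le_const[of "\<lambda>t. C * q ^ t"]) auto
qed

lemma contraction_fix: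
  fixes T :: "(int \<Rightarrow> 'x::banach) \<Rightarrow> (int \<Rightarrow> 'x)"
  assumes q: "0 \<le> q" "q < 1"
  and Tb: "\<And>u. bnd u \<Longrightarrow> bnd (T u)"
  and Tl: "\<And>u v M n. bnd u \<Longrightarrow> bnd v \<Longrightarrow> (\<And>k. norm (u k - v k) \<le> M) \<Longrightarrow> norm (T u n - T v n) \<le> q * M"
  shows "\<exists>w. bnd w \<and> T w = w"
proof -
  define it where "it k = (T ^^ k) (\<lambda>_. 0)" for k
  have it_Suc: "it (Suc k) = T (it k)" for k by (simp add: it_def)
  have bit: "bnd (it k)" for k
  proof (induction k)
    case 0 then show ?case by (auto simp: it_def bnd_def)
  next
    case (Suc k) then show ?case by (simp add: it_Suc Tb)
  qed
  obtain D where D: "\<And>n. norm (it 1 n) \<le> D" using bit[of 1] by (auto simp: bnd_def)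
  have D0: "0 \<le> D" using D[of 0] norm_ge_zero order_trans by blast
  have diff: "norm (it (Suc k) n - it k n) \<le> q ^ k * D" for k n
  proof (induction k arbitrary: n)
    case 0 then show ?case using D by (simp add: it_def)
  next
    case (Suc k)
    have "norm (T (it (Suc k)) n - T (it k) n) \<le> q * (q ^ k * D)"
      by (rule Tl[OF bit bit]) (rule Suc)
    then show ?case by (simp add: it_Suc[of "Suc k"] it_Suc[of k])
  qed
  have nq: "norm q < 1" using q by simp
  have gs: "summable (\<lambda>j. D * q ^ j)" by (rule summable_mult[OF summable_geometric[OF nq]])
  define d where "d n j = it (Suc j) n - it j n" for n j
  have dn: "norm (d n j) \<le> D * q ^ j" for n j using diff[of j n] by (simp add: d_def mult.commute)
  have sd: "summable (d n)" for n
    by (rule summable_norm_cancel, rule summable_norm_comparison_test[OF _ gs]) (use dn in blast)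
  define L where "L n = suminf (d n)" for n
  have itsum: "it k n = (\<Sum>j<k. d n j)" for k n
  proof -
    have "(\<Sum>j<k. d n j) = it k n - it 0 n" unfolding d_def by (rule sum_lessThan_telescope)
    then show ?thesis by (simp add: it_def)
  qed
  have close: "norm (L n - it k n) \<le> D * q ^ k / (1 - q)" for n k
  proof -
    have "L n - it k n = (\<Sum>j. d n (j + k))"
      unfolding L_def itsum using suminf_split_initial_segment[OF sd, of n k] by simp
    also have "norm \<dots> \<le> (\<Sum>j. D * q ^ k * q ^ j)"
    proof (rule norm_suminf_le)
      show "norm (d n (j + k)) \<le> D * q ^ k * q ^ j" for j using dn[of n "j + k"] by (simp add: power_add algebra_simps)
      show "summable (\<lambda>j. D * q ^ k * q ^ j)" by (rule summable_mult[OF summable_geometric[OF nq]])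
    qed
    also have "\<dots> = D * q ^ k / (1 - q)"
      by (simp only: suminf_mult[OF summable_geometric[OF nq]] suminf_geometric[OF nq]) simp
    finally show ?thesis .
  qed
  have bL: "bnd L"
  proof -
    have "norm (L n) \<le> D / (1 - q)" for n using close[of n 0] by (simp add: it_def)
    then show ?thesis by (auto simp: bnd_def)
  qed
  have "T L n = L n" for n
  proof -
    have "norm (T L n - L n) \<le> (2 * D * q / (1 - q)) * q ^ k" for k
    proof -
      have "norm (T L n - T (it k) n) \<le> q * (D * q ^ k / (1 - q))"
        by (rule Tl[OF bL bit]) (rule close)
      moreover have "norm (L n - it (Suc k) n) \<le> D * q ^ Suc k / (1 - q)" by (rule close)
      moreover have "norm (T L n - L n) = norm ((T L n - T (it k) n) - (L n - it (Suc k) n))" by (simp add: it_Suc)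
      ultimately have "norm (T L n - L n) \<le> q * (D * q ^ k / (1 - q)) + D * q ^ Suc k / (1 - q)"
        using norm_triangle_ineq4[of "T L n - T (it k) n" "L n - it (Suc k) n"] by linarith
      also have "\<dots> = (2 * D * q / (1 - q)) * q ^ k" by (simp add: field_simps)
      finally show ?thesis .
    qed
    then have "norm (T L n - L n) \<le> 0" by (rule small_le) (use q in auto)
    then show ?thesis by simp
  qed
  then show ?thesis using bL by blast
qed

locale pert = dich +
  fixes Bp :: "int \<Rightarrow> 'a \<Rightarrow>\<^sub>L 'a" and b :: real
  assumes Bb: "\<And>k. norm (Bp k) \<le> b" and b0: "0 \<le> b" and bc: "b * c < 1"
begin

abbreviation Ba where "Ba k \<equiv> blinfun_apply (Bp k)"

definition issol where
  "issol f w \<longleftrightarrow> bnd w \<and> (\<forall>n. w (n + 1) = blinfun_apply (A n) (w n) + Ba n (w n) + f n)"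

lemma Ba_bound: "norm (Ba k x) \<le> b * norm x"
  using norm_blinfun[of "Bp k" x] mult_right_mono[OF Bb[of k] norm_ge_zero[of x]] by linarith

lemma bc0: "0 \<le> b * c" using b0 c_pos by simp

lemma bnd_Ba: "bnd w \<Longrightarrow> bnd (\<lambda>k. Ba k (w k))"
proof -
  assume "bnd w" then obtain M where M: "\<And>k. norm (w k) \<le> M" by (auto simp: bnd_def)
  have "norm (Ba k (w k)) \<le> b * M" for k
    using Ba_bound[of k "w k"] mult_left_mono[OF M[of k] b0] by linarith
  then show ?thesis by (auto simp: bnd_def)
qed

lemma bnd_add: "bnd u \<Longrightarrow> bnd v \<Longrightarrow> bnd (\<lambda>k. u k + v k)"
proof -
  assume "bnd u" "bnd v" then obtain M N where MN: "\<And>k. norm (u k) \<le> M" "\<And>k. norm (v k) \<le> N" by (auto simp: bnd_def)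
  have "norm (u k + v k) \<le> M + N" for k using norm_triangle_ineq[of "u k" "v k"] MN[of k] by linarith
  then show ?thesis by (auto simp: bnd_def)
qed

lemma bnd_diff: "bnd u \<Longrightarrow> bnd v \<Longrightarrow> bnd (\<lambda>k. u k - v k)"
proof -
  assume "bnd u" "bnd v" then obtain M N where MN: "\<And>k. norm (u k) \<le> M" "\<And>k. norm (v k) \<le> N" by (auto simp: bnd_def)
  have "norm (u k - v k) \<le> M + N" for k using norm_triangle_ineq4[of "u k" "v k"] MN[of k] by linarith
  then show ?thesis by (auto simp: bnd_def)
qed

lemma bnd_Gr: "bnd u \<Longrightarrow> bnd (Gr u)"
proof -
  assume "bnd u" then obtain M where "\<And>k. norm (u k) \<le> M" by (auto simp: bnd_def)
  then have "\<And>n. norm (Gr u n) \<le> c * M" by (rule Gr_bound)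
  then show ?thesis by (auto simp: bnd_def)
qed

lemma sol_unique0:
  assumes "issol (\<lambda>_. 0) d" shows "d n = 0"
proof -
  have bd: "bnd d" and rec: "\<And>n. d (n + 1) = blinfun_apply (A n) (d n) + Ba n (d n)"
    using assms by (auto simp: issol_def)
  define u where "u k = Ba k (d k)" for k
  have bu: "bnd u" unfolding u_def by (rule bnd_Ba[OF bd])
  have x0: "d n - Gr u n = 0" for n
  proof (rule hom_zero[of "\<lambda>n. d n - Gr u n"])
    show "bnd (\<lambda>n. d n - Gr u n)" by (rule bnd_diff[OF bd bnd_Gr[OF bu]])
    fix n show "d (n + 1) - Gr u (n + 1) = blinfun_apply (A n) (d n - Gr u n)"
      using rec[of n] Gr_rec[OF bu, of n] by (simp add: blinfun.diff_right u_def)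
  qed
  then have dG: "d n = Gr u n" for n using x0[of n] by (simp only: right_minus_eq)
  have step: "\<forall>k. norm (d k) \<le> (b * c) * M" if "\<forall>k. norm (d k) \<le> M" for M
  proof
    fix k
    have "norm (u j) \<le> b * M" for j
      using Ba_bound[of j "d j"] mult_left_mono[OF that[rule_format, of j] b0] unfolding u_def by linarith
    then have "norm (Gr u k) \<le> c * (b * M)" by (rule Gr_bound)
    then show "norm (d k) \<le> (b * c) * M" by (simp add: dG algebra_simps)
  qed
  from bd obtain M where M: "\<forall>k. norm (d k) \<le> M" by (auto simp: bnd_def)
  have "\<forall>k. norm (d k) \<le> (b * c) ^ t * M" for t
  proof (induction t)
    case (Suc t) then show ?case using step[OF Suc] by (simp add: algebra_simps)
  qed (use M in simp)
  then show ?thesis by (intro small_zero[of _ M "b * c"]) (use bc0 bc in \<open>auto simp: mult.commute\<close>)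
qed

lemma sol_unique:
  assumes "issol f w1" "issol f w2" shows "w1 = w2"
proof -
  have b1: "bnd w1" and r1: "\<And>n. w1 (n + 1) = blinfun_apply (A n) (w1 n) + Ba n (w1 n) + f n"
    using assms(1) by (auto simp: issol_def)
  have b2: "bnd w2" and r2: "\<And>n. w2 (n + 1) = blinfun_apply (A n) (w2 n) + Ba n (w2 n) + f n"
    using assms(2) by (auto simp: issol_def)
  have "issol (\<lambda>_. 0) (\<lambda>k. w1 k - w2 k)"
    unfolding issol_def
  proof (intro conjI allI)
    show "bnd (\<lambda>k. w1 k - w2 k)" by (rule bnd_diff[OF b1 b2])
    fix n show "w1 (n + 1) - w2 (n + 1) = blinfun_apply (A n) (w1 n - w2 n) + Ba n (w1 n - w2 n) + 0"
      by (simp only: r1 r2 blinfun.diff_right) (simp add: algebra_simps)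
  qed
  then have "w1 k - w2 k = 0" for k by (rule sol_unique0)
  then have "w1 k = w2 k" for k by (simp only: right_minus_eq)
  then show ?thesis by (rule ext)
qed

lemma sol_exists:
  assumes fF: "\<And>k. norm (f k) \<le> F"
  shows "\<exists>w. issol f w \<and> (\<forall>n. norm (w n) \<le> c * F / (1 - b * c))"
proof -
  define T where "T u = Gr (\<lambda>k. Ba k (u k) + f k)" for u
  have bf: "bnd f" using fF by (auto simp: bnd_def)
  have bu: "bnd u \<Longrightarrow> bnd (\<lambda>k. Ba k (u k) + f k)" for u by (rule bnd_add[OF bnd_Ba bf])
  have "\<exists>w. bnd w \<and> T w = w"
  proof (rule contraction_fix[OF bc0 bc])
    fix u :: "int \<Rightarrow> 'a" assume "bnd u" then show "bnd (T u)" unfolding T_def by (intro bnd_Gr bu)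
  next
    fix u v :: "int \<Rightarrow> 'a" and M n assume uv: "bnd u" "bnd v" "\<And>k. norm (u k - v k) \<le> M"
    have "T u n - T v n = Gr (\<lambda>k. (Ba k (u k) + f k) - (Ba k (v k) + f k)) n"
      unfolding T_def by (simp only: Gr_diff[OF bu[OF uv(1)] bu[OF uv(2)]])
    also have "norm \<dots> \<le> c * (b * M)"
    proof (rule Gr_bound)
      fix k
      have "norm ((Ba k (u k) + f k) - (Ba k (v k) + f k)) = norm (Ba k (u k - v k))"
        by (simp add: blinfun.diff_right)
      also have "\<dots> \<le> b * norm (u k - v k)" by (rule Ba_bound)
      also have "\<dots> \<le> b * M" using uv(3)[of k] b0 by (simp add: mult_left_mono)
      finally show "norm ((Ba k (u k) + f k) - (Ba k (v k) + f k)) \<le> b * M" .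
    qed
    finally show "norm (T u n - T v n) \<le> b * c * M" by (simp add: algebra_simps)
  qed
  then obtain w where bw: "bnd w" and w: "T w = w" by blast
  have wn: "w n = Gr (\<lambda>k. Ba k (w k) + f k) n" for n using fun_cong[OF w, of n] unfolding T_def by simp
  have "issol f w"
    unfolding issol_def
  proof (intro conjI allI)
    show "bnd w" by fact
    fix n
    have "w (n + 1) = Gr (\<lambda>k. Ba k (w k) + f k) (n + 1)" by (rule wn)
    also have "\<dots> = blinfun_apply (A n) (Gr (\<lambda>k. Ba k (w k) + f k) n) + (Ba n (w n) + f n)"
      by (rule Gr_rec[OF bu[OF bw]])
    also have "Gr (\<lambda>k. Ba k (w k) + f k) n = w n" by (rule wn[symmetric])
    finally show "w (n + 1) = blinfun_apply (A n) (w n) + Ba n (w n) + f n" by (simp only: add.assoc)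
  qed
  moreover have "norm (w n) \<le> c * F / (1 - b * c)" for n
  proof -
    define R where "R = c * F / (1 - b * c)"
    have nz: "1 - b * c \<noteq> 0" using bc by simp
    have "R - b * c * R = (1 - b * c) * R" by (simp add: algebra_simps)
    also have "\<dots> = c * F" unfolding R_def using nz by simp
    finally have R: "c * F = R - b * c * R" by simp
    have step: "\<forall>n. norm (w n) \<le> R + b * c * X" if "\<forall>n. norm (w n) \<le> R + X" for X
    proof
      fix n
      have "norm (Ba k (w k) + f k) \<le> b * (R + X) + F" for k
      proof -
        have "norm (Ba k (w k)) \<le> b * (R + X)"
          using Ba_bound[of k "w k"] mult_left_mono[OF that[rule_format, of k] b0] by linarith
        then show ?thesis using fF[of k] norm_triangle_ineq[of "Ba k (w k)" "f k"] by linarith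
      qed
      then have "norm (Gr (\<lambda>k. Ba k (w k) + f k) n) \<le> c * (b * (R + X) + F)" by (rule Gr_bound)
      then have "norm (w n) \<le> c * (b * (R + X) + F)" by (simp only: wn[symmetric])
      also have "\<dots> = R + b * c * X" using R by (simp add: algebra_simps)
      finally show "norm (w n) \<le> R + b * c * X" .
    qed
    from bw obtain M where M: "\<forall>n. norm (w n) \<le> M" by (auto simp: bnd_def)
    have "\<forall>n. norm (w n) \<le> R + (b * c) ^ t * (\<bar>M\<bar> + \<bar>R\<bar>)" for t
    proof (induction t)
      case 0 show ?case
      proof
        fix n show "norm (w n) \<le> R + (b * c) ^ 0 * (\<bar>M\<bar> + \<bar>R\<bar>)"
          using M[rule_format, of n] abs_ge_self[of M] abs_ge_minus_self[of R] by simp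
      qed
    next
      case (Suc t) then show ?case using step[OF Suc] by (simp add: algebra_simps)
    qed
    then have "norm (w n) - R \<le> (\<bar>M\<bar> + \<bar>R\<bar>) * (b * c) ^ t" for t by (simp add: algebra_simps)
    then have "norm (w n) - R \<le> 0" by (rule small_le) (use bc0 bc in auto)
    then show ?thesis unfolding R_def by simp
  qed
  ultimately show ?thesis by blast
qed

definition Wsol where "Wsol z = (THE w. issol (\<lambda>n. if n = -1 then z else 0) w)"

lemma Wsol: "issol (\<lambda>n. if n = -1 then z else 0) (Wsol z)"
  and Wsol_bound: "norm (Wsol z n) \<le> c * norm z / (1 - b * c)"
proof -
  have "norm (if k = -1 then z else 0) \<le> norm z" for k :: int by auto
  from sol_exists[of "\<lambda>n. if n = -1 then z else 0" "norm z", OF this] obtain w where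
    w: "issol (\<lambda>n. if n = -1 then z else 0) w" "\<forall>n. norm (w n) \<le> c * norm z / (1 - b * c)" by blast
  have "Wsol z = w" unfolding Wsol_def by (rule the_equality[where P="issol (\<lambda>n. if n = -1 then z else 0)", OF w(1)]) (rule sol_unique[OF _ w(1)])
  then show "issol (\<lambda>n. if n = -1 then z else 0) (Wsol z)" "norm (Wsol z n) \<le> c * norm z / (1 - b * c)"
    using w by auto
qed

lemma Wsol_eq: "issol (\<lambda>n. if n = -1 then z else 0) w \<Longrightarrow> Wsol z = w"
  by (rule sol_unique[OF Wsol])

lemma Wsol_linear: "bounded_linear (\<lambda>z. Wsol z n)"
proof (rule bounded_linear_intro[where K = "c / (1 - b * c)"])
  fix x y
  have "issol (\<lambda>n. if n = -1 then x + y else 0) (\<lambda>k. Wsol x k + Wsol y k)"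
    unfolding issol_def
  proof (intro conjI allI)
    have "bnd (Wsol x)" "bnd (Wsol y)" using Wsol[of x] Wsol[of y] unfolding issol_def by blast+
    then show "bnd (\<lambda>k. Wsol x k + Wsol y k)" by (rule bnd_add)
    fix n
    have rx: "Wsol x (n + 1) = blinfun_apply (A n) (Wsol x n) + Ba n (Wsol x n) + (if n = -1 then x else 0)"
      and ry: "Wsol y (n + 1) = blinfun_apply (A n) (Wsol y n) + Ba n (Wsol y n) + (if n = -1 then y else 0)"
      using Wsol[of x] Wsol[of y] unfolding issol_def by blast+
    show "Wsol x (n + 1) + Wsol y (n + 1) = blinfun_apply (A n) (Wsol x n + Wsol y n) + Ba n (Wsol x n + Wsol y n) + (if n = -1 then x + y else 0)"
      by (simp only: rx ry blinfun.add_right) (simp add: algebra_simps)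
  qed
  from Wsol_eq[OF this] show "Wsol (x + y) n = Wsol x n + Wsol y n" by simp
next
  fix r x
  have "issol (\<lambda>n. if n = -1 then r *\<^sub>R x else 0) (\<lambda>k. r *\<^sub>R Wsol x k)"
    unfolding issol_def
  proof (intro conjI allI)
    obtain M where M: "\<And>k. norm (Wsol x k) \<le> M" using Wsol[of x] by (auto simp: issol_def bnd_def)
    have "norm (r *\<^sub>R Wsol x k) \<le> \<bar>r\<bar> * M" for k using mult_left_mono[OF M[of k] abs_ge_zero[of r]] by simp
    then show "bnd (\<lambda>k. r *\<^sub>R Wsol x k)" by (auto simp: bnd_def)
    fix n
    have rx: "Wsol x (n + 1) = blinfun_apply (A n) (Wsol x n) + Ba n (Wsol x n) + (if n = -1 then x else 0)"
      using Wsol[of x] unfolding issol_def by blast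
    show "r *\<^sub>R Wsol x (n + 1) = blinfun_apply (A n) (r *\<^sub>R Wsol x n) + Ba n (r *\<^sub>R Wsol x n) + (if n = -1 then r *\<^sub>R x else 0)"
      by (simp only: rx blinfun.scaleR_right scaleR_add_right) simp
  qed
  from Wsol_eq[OF this] show "Wsol (r *\<^sub>R x) n = r *\<^sub>R Wsol x n" by simp
next
  fix x show "norm (Wsol x n) \<le> norm x * (c / (1 - b * c))" using Wsol_bound[of x n] by (simp add: ac_simps)
qed

end


definition VP :: "(int \<Rightarrow> 'x::real_normed_vector \<Rightarrow>\<^sub>L 'x) \<Rightarrow> 'x set" where
  "VP C = {z. \<exists>M. \<forall>t. norm (blinfun_apply (ev C 0 t) z) \<le> M}"

definition bs :: "(int \<Rightarrow> 'x::real_normed_vector \<Rightarrow>\<^sub>L 'x) \<Rightarrow> 'x \<Rightarrow> (int \<Rightarrow> 'x) \<Rightarrow> bool" where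
  "bs C z \<xi> \<longleftrightarrow> \<xi> 0 = z \<and> (\<forall>k<0. \<xi> (k + 1) = blinfun_apply (C k) (\<xi> k)) \<and> (\<exists>M. \<forall>k\<le>0. norm (\<xi> k) \<le> M)"

definition VM :: "(int \<Rightarrow> 'x::real_normed_vector \<Rightarrow>\<^sub>L 'x) \<Rightarrow> 'x set" where
  "VM C = {z. \<exists>\<xi>. bs C z \<xi>}"

lemma steps_ev:
  assumes "\<And>k. m \<le> k \<Longrightarrow> k < m + int t \<Longrightarrow> \<xi> (k + 1) = blinfun_apply (C k) (\<xi> k)"
  shows "\<xi> (m + int t) = blinfun_apply (ev C m t) (\<xi> m)"
  using assms
proof (induction t)
  case (Suc t)
  have "\<xi> (m + int (Suc t)) = \<xi> ((m + int t) + 1)" by (simp add: algebra_simps)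
  also have "\<dots> = blinfun_apply (C (m + int t)) (\<xi> (m + int t))" by (rule Suc.prems) auto
  also have "\<xi> (m + int t) = blinfun_apply (ev C m t) (\<xi> m)" by (rule Suc.IH) (rule Suc.prems, auto)
  finally show ?case by simp
qed simp

lemma ev_shift: "ev (\<lambda>k. C (k + s)) m t = ev C (m + s) t"
  by (induction t) (simp_all add: ac_simps)

lemma fin_bound: "\<exists>S. \<forall>t\<le>(n::nat). norm (g t :: 'x::real_normed_vector) \<le> S"
proof (intro exI allI impI)
  fix t assume "t \<le> n"
  then show "norm (g t) \<le> (\<Sum>j\<le>n. norm (g j))" by (intro member_le_sum) auto
qed

lemma VP_subspace: "subspace (VP C)"
proof (rule real_vector.subspaceI)
  show "0 \<in> VP C" by (auto simp: VP_def)
next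
  fix x y assume "x \<in> VP C" "y \<in> VP C"
  then obtain M N where M: "\<And>t. norm (blinfun_apply (ev C 0 t) x) \<le> M" and N: "\<And>t. norm (blinfun_apply (ev C 0 t) y) \<le> N"
    by (auto simp: VP_def)
  have "norm (blinfun_apply (ev C 0 t) (x + y)) \<le> M + N" for t
    using norm_triangle_ineq[of "blinfun_apply (ev C 0 t) x" "blinfun_apply (ev C 0 t) y"] M[of t] N[of t]
    by (simp add: blinfun.add_right)
  then show "x + y \<in> VP C" by (auto simp: VP_def)
next
  fix c x assume "x \<in> VP C"
  then obtain M where M: "\<And>t. norm (blinfun_apply (ev C 0 t) x) \<le> M" by (auto simp: VP_def)
  have "norm (blinfun_apply (ev C 0 t) (c *\<^sub>R x)) \<le> \<bar>c\<bar> * M" for t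
    using mult_left_mono[OF M[of t] abs_ge_zero[of c]] by (simp add: blinfun.scaleR_right)
  then show "c *\<^sub>R x \<in> VP C" by (auto simp: VP_def)
qed

lemma VM_subspace: "subspace (VM C)"
proof (rule real_vector.subspaceI)
  have "bs C 0 (\<lambda>_. 0)" by (auto simp: bs_def)
  then show "0 \<in> VM C" by (auto simp: VM_def)
next
  fix x y assume "x \<in> VM C" "y \<in> VM C"
  then obtain \<xi> \<eta> where \<xi>: "bs C x \<xi>" and \<eta>: "bs C y \<eta>" by (auto simp: VM_def)
  from \<xi> obtain M where M: "\<And>k. k \<le> 0 \<Longrightarrow> norm (\<xi> k) \<le> M" by (auto simp: bs_def)
  from \<eta> obtain N where N: "\<And>k. k \<le> 0 \<Longrightarrow> norm (\<eta> k) \<le> N" by (auto simp: bs_def)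
  have "bs C (x + y) (\<lambda>k. \<xi> k + \<eta> k)"
    unfolding bs_def
  proof (intro conjI allI impI)
    show "\<xi> 0 + \<eta> 0 = x + y" using \<xi> \<eta> by (auto simp: bs_def)
    fix k :: int assume "k < 0"
    then show "\<xi> (k + 1) + \<eta> (k + 1) = blinfun_apply (C k) (\<xi> k + \<eta> k)"
      using \<xi> \<eta> by (auto simp: bs_def blinfun.add_right)
  next
    have "norm (\<xi> k + \<eta> k) \<le> M + N" if "k \<le> 0" for k
      using norm_triangle_ineq[of "\<xi> k" "\<eta> k"] M[OF that] N[OF that] by linarith
    then show "\<exists>M. \<forall>k\<le>0. norm (\<xi> k + \<eta> k) \<le> M" by blast
  qed
  then show "x + y \<in> VM C" by (auto simp: VM_def)
next
  fix c x assume "x \<in> VM C"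
  then obtain \<xi> where \<xi>: "bs C x \<xi>" by (auto simp: VM_def)
  from \<xi> obtain M where M: "\<And>k. k \<le> 0 \<Longrightarrow> norm (\<xi> k) \<le> M" by (auto simp: bs_def)
  have "bs C (c *\<^sub>R x) (\<lambda>k. c *\<^sub>R \<xi> k)"
    unfolding bs_def
  proof (intro conjI allI impI)
    show "c *\<^sub>R \<xi> 0 = c *\<^sub>R x" using \<xi> by (auto simp: bs_def)
    fix k :: int assume "k < 0"
    then show "c *\<^sub>R \<xi> (k + 1) = blinfun_apply (C k) (c *\<^sub>R \<xi> k)"
      using \<xi> by (auto simp: bs_def blinfun.scaleR_right)
  next
    have "norm (c *\<^sub>R \<xi> k) \<le> \<bar>c\<bar> * M" if "k \<le> 0" for k
      using mult_left_mono[OF M[OF that] abs_ge_zero[of c]] by simp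
    then show "\<exists>M. \<forall>k\<le>0. norm (c *\<^sub>R \<xi> k) \<le> M" by blast
  qed
  then show "c *\<^sub>R x \<in> VM C" by (auto simp: VM_def)
qed

lemma ev_0_Suc: "blinfun_apply (ev C 0 (Suc j)) z = blinfun_apply (C (int j)) (blinfun_apply (ev C 0 j) z)"
  by simp

lemma VP_shift: "z \<in> VP C \<Longrightarrow> blinfun_apply (ev C 0 n) z \<in> VP (\<lambda>k. C (k + int n))"
proof -
  assume "z \<in> VP C"
  then obtain M where M: "\<And>t. norm (blinfun_apply (ev C 0 t) z) \<le> M" by (auto simp: VP_def)
  have "blinfun_apply (ev (\<lambda>k. C (k + int n)) 0 t) (blinfun_apply (ev C 0 n) z) = blinfun_apply (ev C 0 (t + n)) z" for t
    by (simp add: ev_shift ev_add_apply)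
  then show ?thesis using M by (auto simp: VP_def)
qed

lemma VM_shift1: "z \<in> VM C \<Longrightarrow> blinfun_apply (ev C 0 n) z \<in> VM (\<lambda>k. C (k + int n))"
proof -
  assume "z \<in> VM C"
  then obtain \<xi> where \<xi>: "bs C z \<xi>" by (auto simp: VM_def)
  from \<xi> obtain M where M: "\<And>k. k \<le> 0 \<Longrightarrow> norm (\<xi> k) \<le> M" by (auto simp: bs_def)
  have \<xi>0: "\<xi> 0 = z" and \<xi>s: "\<And>k. k < 0 \<Longrightarrow> \<xi> (k + 1) = blinfun_apply (C k) (\<xi> k)"
    using \<xi> by (auto simp: bs_def)
  obtain S where S: "\<And>t. t \<le> n \<Longrightarrow> norm (blinfun_apply (ev C 0 t) z) \<le> S"
    using fin_bound[of n "\<lambda>t. blinfun_apply (ev C 0 t) z"] by blast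
  have M0: "0 \<le> M" using M[of 0] norm_ge_zero order_trans by blast
  have S0: "0 \<le> S" using S[of 0] norm_ge_zero order_trans by blast
  define \<eta> where "\<eta> k = (if k + int n \<le> 0 then \<xi> (k + int n) else blinfun_apply (ev C 0 (nat (k + int n))) z)" for k
  have "bs (\<lambda>k. C (k + int n)) (blinfun_apply (ev C 0 n) z) \<eta>"
    unfolding bs_def
  proof (intro conjI allI impI)
    show "\<eta> 0 = blinfun_apply (ev C 0 n) z"
      by (cases "n = 0") (auto simp: \<eta>_def \<xi>0)
    fix k :: int assume k: "k < 0"
    show "\<eta> (k + 1) = blinfun_apply (C (k + int n)) (\<eta> k)"
    proof (cases "k + 1 + int n \<le> 0")
      case True
      then have "\<eta> (k + 1) = \<xi> ((k + int n) + 1)" by (simp add: \<eta>_def algebra_simps)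
      also have "\<dots> = blinfun_apply (C (k + int n)) (\<xi> (k + int n))" by (rule \<xi>s) (use True in simp)
      finally show ?thesis using True by (simp add: \<eta>_def)
    next
      case False
      then have n1: "nat (k + 1 + int n) = Suc (nat (k + int n))" by simp
      have "\<eta> (k + 1) = blinfun_apply (ev C 0 (Suc (nat (k + int n)))) z"
        using False n1 by (simp add: \<eta>_def algebra_simps)
      also have "\<dots> = blinfun_apply (C (k + int n)) (blinfun_apply (ev C 0 (nat (k + int n))) z)"
        using False by simp
      also have "blinfun_apply (ev C 0 (nat (k + int n))) z = \<eta> k"
        using False by (cases "k + int n = 0") (auto simp: \<eta>_def \<xi>0)
      finally show ?thesis .
    qed
  next
    have "norm (\<eta> k) \<le> M + S" if "k \<le> 0" for k
    proof (cases "k + int n \<le> 0")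
      case True then show ?thesis using M[OF True] S0 by (simp add: \<eta>_def)
    next
      case False
      have "nat (k + int n) \<le> n" using that by simp
      then show ?thesis using False S[of "nat (k + int n)"] M0 by (simp add: \<eta>_def)
    qed
    then show "\<exists>M. \<forall>k\<le>0. norm (\<eta> k) \<le> M" by blast
  qed
  then show ?thesis by (auto simp: VM_def)
qed

lemma VM_shift2:
  assumes "bs (\<lambda>k. C (k + int n)) z' \<eta>"
  shows "\<eta> (- int n) \<in> VM C" "blinfun_apply (ev C 0 n) (\<eta> (- int n)) = z'"
proof -
  have \<eta>0: "\<eta> 0 = z'" and \<eta>s: "\<And>k. k < 0 \<Longrightarrow> \<eta> (k + 1) = blinfun_apply (C (k + int n)) (\<eta> k)"
    using assms by (auto simp: bs_def)
  from assms obtain M where M: "\<And>k. k \<le> 0 \<Longrightarrow> norm (\<eta> k) \<le> M" by (auto simp: bs_def)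
  have "bs C (\<eta> (- int n)) (\<lambda>k. \<eta> (k - int n))"
    unfolding bs_def
  proof (intro conjI allI impI)
    show "\<eta> (0 - int n) = \<eta> (- int n)" by simp
    fix k :: int assume "k < 0"
    then have "\<eta> ((k - int n) + 1) = blinfun_apply (C ((k - int n) + int n)) (\<eta> (k - int n))" by (intro \<eta>s) simp
    then show "\<eta> (k + 1 - int n) = blinfun_apply (C k) (\<eta> (k - int n))" by (simp add: algebra_simps)
  next
    show "\<exists>M. \<forall>k\<le>0. norm (\<eta> (k - int n)) \<le> M" using M by (intro exI[of _ M]) auto
  qed
  then show "\<eta> (- int n) \<in> VM C" by (auto simp: VM_def)
  have "\<eta> (- int n + int n) = blinfun_apply (ev (\<lambda>k. C (k + int n)) (- int n) n) (\<eta> (- int n))"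
    by (rule steps_ev) (rule \<eta>s, simp)
  then show "blinfun_apply (ev C 0 n) (\<eta> (- int n)) = z'" by (simp add: ev_shift \<eta>0)
qed

lemma VM_shift: "blinfun_apply (ev C 0 n) ` VM C = VM (\<lambda>k. C (k + int n))"
proof
  show "blinfun_apply (ev C 0 n) ` VM C \<subseteq> VM (\<lambda>k. C (k + int n))" using VM_shift1 by blast
  show "VM (\<lambda>k. C (k + int n)) \<subseteq> blinfun_apply (ev C 0 n) ` VM C"
  proof
    fix z' assume "z' \<in> VM (\<lambda>k. C (k + int n))"
    then obtain \<eta> where "bs (\<lambda>k. C (k + int n)) z' \<eta>" by (auto simp: VM_def)
    from VM_shift2[OF this] show "z' \<in> blinfun_apply (ev C 0 n) ` VM C" by (metis image_eqI)
  qed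
qed

lemma VM_inj:
  assumes inter: "\<And>z. z \<in> VP C \<Longrightarrow> z \<in> VM C \<Longrightarrow> z = 0"
  shows "inj_on (blinfun_apply (ev C 0 n)) (VM C)"
proof (rule inj_onI)
  fix x y assume xy: "x \<in> VM C" "y \<in> VM C" "blinfun_apply (ev C 0 n) x = blinfun_apply (ev C 0 n) y"
  define d where "d = x - y"
  have dM: "d \<in> VM C" unfolding d_def using VM_subspace xy(1,2) by (rule real_vector.subspace_diff)
  have d0: "blinfun_apply (ev C 0 n) d = 0" using xy(3) by (simp add: d_def blinfun.diff_right)
  obtain S where S: "\<And>t. t \<le> n \<Longrightarrow> norm (blinfun_apply (ev C 0 t) d) \<le> S"
    using fin_bound[of n "\<lambda>t. blinfun_apply (ev C 0 t) d"] by blast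
  have "norm (blinfun_apply (ev C 0 t) d) \<le> S" for t
  proof (cases "t \<le> n")
    case True then show ?thesis by (rule S)
  next
    case False
    then have "t = (t - n) + n" by simp
    then have "blinfun_apply (ev C 0 t) d = blinfun_apply (ev C (int n) (t - n)) (blinfun_apply (ev C 0 n) d)"
      by (metis ev_add_apply add_0)
    moreover have "0 \<le> S" using S[of 0] norm_ge_zero order_trans by blast
    ultimately show ?thesis using d0 by (simp add: blinfun.zero_right)
  qed
  then have "d \<in> VP C" by (auto simp: VP_def)
  then have "d = 0" using inter dM by blast
  then show "x = y" by (simp add: d_def)
qed



context pert begin

definition Cn where "Cn k = A k + Bp k"

lemma Cn_apply: "blinfun_apply (Cn k) x = blinfun_apply (A k) x + Ba k x"
  by (simp add: Cn_def plus_blinfun.rep_eq)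

lemma issol_iff: "issol f w \<longleftrightarrow> bnd w \<and> (\<forall>n. w (n + 1) = blinfun_apply (Cn n) (w n) + f n)"
  by (simp add: issol_def Cn_apply)

lemma W_rec: "Wsol z (n + 1) = blinfun_apply (Cn n) (Wsol z n) + (if n = -1 then z else 0)"
  using Wsol[of z] by (simp add: issol_iff)

lemma W_bnd: "\<exists>M. \<forall>k. norm (Wsol z k) \<le> M"
  using Wsol_bound by blast

lemma inter: assumes "z \<in> VP Cn" "z \<in> VM Cn" shows "z = 0"
proof -
  from assms(1) obtain M1 where M1: "\<And>t. norm (blinfun_apply (ev Cn 0 t) z) \<le> M1" by (auto simp: VP_def)
  from assms(2) obtain \<xi> where \<xi>: "bs Cn z \<xi>" by (auto simp: VM_def)
  from \<xi> obtain M2 where M2: "\<And>k. k \<le> 0 \<Longrightarrow> norm (\<xi> k) \<le> M2" by (auto simp: bs_def)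
  have \<xi>0: "\<xi> 0 = z" and \<xi>s: "\<And>k. k < 0 \<Longrightarrow> \<xi> (k + 1) = blinfun_apply (Cn k) (\<xi> k)"
    using \<xi> by (auto simp: bs_def)
  define w where "w k = (if 0 \<le> k then blinfun_apply (ev Cn 0 (nat k)) z else \<xi> k)" for k
  have "issol (\<lambda>_. 0) w"
    unfolding issol_iff
  proof (intro conjI allI)
    have "norm (w k) \<le> \<bar>M1\<bar> + \<bar>M2\<bar>" for k
    proof (cases "0 \<le> k")
      case True then show ?thesis using M1[of "nat k"] by (simp add: w_def)
    next
      case False then show ?thesis using M2[of k] by (simp add: w_def)
    qed
    then show "bnd w" by (auto simp: bnd_def)
    fix n :: int
    show "w (n + 1) = blinfun_apply (Cn n) (w n) + 0"
    proof (cases "0 \<le> n")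
      case True
      then have "nat (n + 1) = Suc (nat n)" by simp
      then show ?thesis using True by (simp add: w_def)
    next
      case False
      show ?thesis
      proof (cases "n = -1")
        case True then show ?thesis using \<xi>s[of "-1"] \<xi>0 by (simp add: w_def)
      next
        case F: False
        then show ?thesis using \<xi>s[of n] False by (simp add: w_def)
      qed
    qed
  qed
  then have "w 0 = 0" by (rule sol_unique0)
  then show ?thesis by (simp add: w_def)
qed

lemma a_VP: "Wsol z 0 \<in> VP Cn"
proof -
  have "Wsol z (0 + int t) = blinfun_apply (ev Cn 0 t) (Wsol z 0)" for t
    by (rule steps_ev) (simp add: W_rec)
  moreover obtain M where "\<And>k. norm (Wsol z k) \<le> M" using W_bnd by blast
  ultimately have "norm (blinfun_apply (ev Cn 0 t) (Wsol z 0)) \<le> M" for t by (metis add_0)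
  then show ?thesis unfolding VP_def by blast
qed

lemma a_bs: "bs Cn (z - Wsol z 0) (\<lambda>k. if k < 0 then - Wsol z k else z - Wsol z 0)"
  unfolding bs_def
proof (intro conjI allI impI)
  show "(if (0::int) < 0 then - Wsol z 0 else z - Wsol z 0) = z - Wsol z 0" by simp
  fix k :: int assume k: "k < 0"
  show "(if k + 1 < 0 then - Wsol z (k + 1) else z - Wsol z 0) =
        blinfun_apply (Cn k) (if k < 0 then - Wsol z k else z - Wsol z 0)"
  proof (cases "k = -1")
    case True
    then show ?thesis using W_rec[of z "-1"] by (simp add: blinfun.minus_right)
  next
    case False
    then have "k + 1 < 0" using k by simp
    then show ?thesis using W_rec[of z k] k False by (simp add: blinfun.minus_right)
  qed
next
  obtain M where M: "\<And>k. norm (Wsol z k) \<le> M" using W_bnd by blast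
  have "norm (if k < 0 then - Wsol z k else z - Wsol z 0) \<le> M + norm z" for k :: int
  proof (cases "k < 0")
    case True
    have "norm (Wsol z k) \<le> M + norm z" using M[of k] norm_ge_zero[of z] by linarith
    with True show ?thesis by simp
  next
    case False then show ?thesis using M[of 0] norm_triangle_ineq4[of z "Wsol z 0"] by simp
  qed
  then show "\<exists>M. \<forall>k\<le>0. norm (if k < 0 then - Wsol z k else z - Wsol z 0) \<le> M" by blast
qed

lemma a_VM: "z - Wsol z 0 \<in> VM Cn"
  using a_bs by (auto simp: VM_def)

lemma VP_char: "VP Cn = {z. Wsol z 0 = z}"
proof safe
  fix z assume z: "z \<in> VP Cn"
  have "z - Wsol z 0 \<in> VP Cn" using VP_subspace z a_VP by (rule real_vector.subspace_diff)
  then have "z - Wsol z 0 = 0" using inter a_VM by blast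
  then show "Wsol z 0 = z" by simp
next
  fix z assume "Wsol z 0 = z" then show "z \<in> VP Cn" using a_VP[of z] by simp
qed

lemma VM_char: "VM Cn = {z. Wsol z 0 = 0}"
proof safe
  fix z assume z: "z \<in> VM Cn"
  have "z - (z - Wsol z 0) \<in> VM Cn" using VM_subspace z a_VM by (rule real_vector.subspace_diff)
  then have "Wsol z 0 = 0" using inter a_VP by simp
  then show "Wsol z 0 = 0" .
next
  fix z assume "Wsol z 0 = 0" then show "z \<in> VM Cn" using a_VM[of z] by simp
qed

lemma a_cont: "continuous_on UNIV (\<lambda>z. Wsol z n)"
  by (rule bounded_linear.continuous_on[OF Wsol_linear continuous_on_id])

lemma VP_closed: "closed (VP Cn)"
  unfolding VP_char by (rule closed_Collect_eq[OF a_cont continuous_on_id])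

lemma VM_closed: "closed (VM Cn)"
  unfolding VM_char by (rule closed_Collect_eq[OF a_cont continuous_on_const])

lemma dsum: "direct_sum (VP Cn) (VM Cn)"
  unfolding direct_sum_def
proof (intro conjI allI)
  show "VP Cn \<inter> VM Cn = {0}"
    using inter real_vector.subspace_0[OF VP_subspace] real_vector.subspace_0[OF VM_subspace] by blast
  fix x show "\<exists>u\<in>VP Cn. \<exists>v\<in>VM Cn. x = u + v"
    using a_VP[of x] a_VM[of x] by (intro bexI[of _ "Wsol x 0"] bexI[of _ "x - Wsol x 0"]) auto
qed

lemma VM_bs: "z \<in> VM Cn \<Longrightarrow> bs Cn z (\<lambda>k. if k < 0 then - Wsol z k else z)"
proof -
  assume "z \<in> VM Cn" then have "Wsol z 0 = 0" unfolding VM_char by simp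
  then show ?thesis using a_bs[of z] by (simp only: diff_zero)
qed

end


lemma (in pert) Cn_eq: "Cn = (\<lambda>k. A k + Bp k)" by (simp add: Cn_def fun_eq_iff)

lemma Theta_add: assumes "random_flow M \<theta>"
  shows "Theta \<theta> a (Theta \<theta> b \<omega>) = Theta \<theta> (a + b) \<omega>"
proof -
  have "\<theta> (a + b) = \<theta> a \<circ> \<theta> b" using assms by (simp add: random_flow_def)
  then show ?thesis by (simp add: Theta_def algebra_simps)
qed

lemma Theta_0: assumes "random_flow M \<theta>" shows "Theta \<theta> 0 \<omega> = \<omega>"
  using assms by (simp add: random_flow_def Theta_def)

lemma gen_ev: assumes "random_flow M \<theta>"
  shows "gen_by \<theta> A t (Theta \<theta> m \<omega>) = ev (\<lambda>k. A (Theta \<theta> k \<omega>)) m t"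
proof (induction t)
  case (Suc t)
  have "Theta \<theta> (int t) (Theta \<theta> m \<omega>) = Theta \<theta> (m + int t) \<omega>"
    using Theta_add[OF assms] by (simp add: add.commute)
  then show ?case using Suc by simp
qed simp

lemma Om_inv: assumes "theta_invariant_set \<theta> Om" "snd \<omega> \<in> Om"
  shows "snd (Theta \<theta> m \<omega>) \<in> Om"
  using assms unfolding theta_invariant_set_def Theta_def by (metis image_eqI snd_conv)

lemma inv_Theta: assumes "Theta_invariant \<theta> D" shows "D (Theta \<theta> m \<omega>) = D \<omega>"
  using assms unfolding Theta_invariant_def by blast

lemma phi_gen:
  assumes "linear_cocycle M \<theta> \<phi>" "generated_by \<theta> A \<phi>"
  shows "\<phi> = gen_by \<theta> A"
proof (intro ext)
  fix n \<omega>p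
  have z: "\<forall>\<omega>\<tau>. \<phi> 0 \<omega>\<tau> = id_blinfun" using assms(1) unfolding linear_cocycle_def by blast
  have g: "\<forall>n \<omega>p. n \<ge> 1 \<longrightarrow> \<phi> n \<omega>p = gen_by \<theta> A n \<omega>p" using assms(2) unfolding generated_by_def by blast
  show "\<phi> n \<omega>p = gen_by \<theta> A n \<omega>p"
  proof (cases n)
    case 0 then show ?thesis using z by (metis gen_by.simps(1))
  next
    case (Suc m)
    have "n \<ge> 1" using Suc by simp
    then show ?thesis using g by blast
  qed
qed

lemma dich_inst:
  assumes rf: "random_flow M \<theta>"
    and ed: "exp_dichotomy M \<theta> (gen_by \<theta> A) K \<alpha> Om Pis"
    and om: "snd \<omega> \<in> Om"
  shows "dich (\<lambda>k. A (Theta \<theta> k \<omega>)) (\<lambda>k. Pis (Theta \<theta> k \<omega>)) (K \<omega>) (\<alpha> \<omega>)"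
proof -
  note ed' = ed[unfolded exp_dichotomy_def]
  have inv: "theta_invariant_set \<theta> Om" and Ki: "Theta_invariant \<theta> K" and ai: "Theta_invariant \<theta> \<alpha>"
    using ed' by blast+
  have KA: "\<And>\<omega>\<tau>. K \<omega>\<tau> \<ge> 1 \<and> \<alpha> \<omega>\<tau> > 0" using ed' by blast
  have idm: "\<And>\<omega>\<tau>. snd \<omega>\<tau> \<in> Om \<Longrightarrow> Pis \<omega>\<tau> o\<^sub>L Pis \<omega>\<tau> = Pis \<omega>\<tau>" using ed' by blast
  have cm: "\<And>\<omega>\<tau> t. snd \<omega>\<tau> \<in> Om \<Longrightarrow> Pis (Theta \<theta> (int t) \<omega>\<tau>) o\<^sub>L gen_by \<theta> A t \<omega>\<tau> = gen_by \<theta> A t \<omega>\<tau> o\<^sub>L Pis \<omega>\<tau>"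
    using ed' by blast
  have isoA: "\<And>\<omega>\<tau> t. snd \<omega>\<tau> \<in> Om \<Longrightarrow> iso_between (gen_by \<theta> A t \<omega>\<tau>) (range (blinfun_apply (id_blinfun - Pis \<omega>\<tau>)))
          (range (blinfun_apply (id_blinfun - Pis (Theta \<theta> (int t) \<omega>\<tau>))))" using ed' by blast
  have stA: "\<And>\<omega>\<tau> t. snd \<omega>\<tau> \<in> Om \<Longrightarrow> norm (gen_by \<theta> A t \<omega>\<tau> o\<^sub>L Pis \<omega>\<tau>) \<le> K \<omega>\<tau> * exp (- \<alpha> \<omega>\<tau> * real t)"
    using ed' by blast
  have unA: "\<And>\<omega>\<tau> n x. snd \<omega>\<tau> \<in> Om \<Longrightarrow>
        norm (inv_into (range (blinfun_apply (id_blinfun - Pis (Theta \<theta> (- int n) \<omega>\<tau>))))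
                 (blinfun_apply (gen_by \<theta> A n (Theta \<theta> (- int n) \<omega>\<tau>)))
                 (blinfun_apply (id_blinfun - Pis \<omega>\<tau>) x))
          \<le> K \<omega>\<tau> * exp (\<alpha> \<omega>\<tau> * (- real n)) * norm x" using ed' by blast
  have om': "snd (Theta \<theta> m \<omega>) \<in> Om" for m by (rule Om_inv[OF inv om])
  have TT: "Theta \<theta> (int t) (Theta \<theta> m \<omega>) = Theta \<theta> (m + int t) \<omega>" for t m
    using Theta_add[OF rf] by (simp add: add.commute)
  have ge: "gen_by \<theta> A t (Theta \<theta> m \<omega>) = ev (\<lambda>k. A (Theta \<theta> k \<omega>)) m t" for t m by (rule gen_ev[OF rf])
  show ?thesis
  proof
    show "1 \<le> K \<omega>" "0 < \<alpha> \<omega>" using KA[of \<omega>] by auto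
    fix m
    show "Pis (Theta \<theta> m \<omega>) o\<^sub>L Pis (Theta \<theta> m \<omega>) = Pis (Theta \<theta> m \<omega>)" using idm om' by blast
    fix t
    show "Pis (Theta \<theta> (m + int t) \<omega>) o\<^sub>L ev (\<lambda>k. A (Theta \<theta> k \<omega>)) m t = ev (\<lambda>k. A (Theta \<theta> k \<omega>)) m t o\<^sub>L Pis (Theta \<theta> m \<omega>)"
      using cm[OF om'[of m], of t] by (simp only: TT ge)
    have "iso_between (gen_by \<theta> A t (Theta \<theta> m \<omega>)) (range (blinfun_apply (id_blinfun - Pis (Theta \<theta> m \<omega>))))
          (range (blinfun_apply (id_blinfun - Pis (Theta \<theta> (int t) (Theta \<theta> m \<omega>)))))"
      using isoA[OF om'[of m]] by blast
    then show "bij_betw (blinfun_apply (ev (\<lambda>k. A (Theta \<theta> k \<omega>)) m t)) (range (blinfun_apply (id_blinfun - Pis (Theta \<theta> m \<omega>))))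
        (range (blinfun_apply (id_blinfun - Pis (Theta \<theta> (m + int t) \<omega>))))"
      by (simp add: iso_between_def TT ge)
    have "norm (gen_by \<theta> A t (Theta \<theta> m \<omega>) o\<^sub>L Pis (Theta \<theta> m \<omega>)) \<le> K (Theta \<theta> m \<omega>) * exp (- \<alpha> (Theta \<theta> m \<omega>) * real t)"
      using stA[OF om'[of m]] by blast
    then show "norm (ev (\<lambda>k. A (Theta \<theta> k \<omega>)) m t o\<^sub>L Pis (Theta \<theta> m \<omega>)) \<le> K \<omega> * exp (- \<alpha> \<omega> * real t)"
      by (simp add: ge inv_Theta[OF Ki] inv_Theta[OF ai])
    fix x
    have TT2: "Theta \<theta> (- int t) (Theta \<theta> (m + int t) \<omega>) = Theta \<theta> m \<omega>"
      using Theta_add[OF rf] by simp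
    have "norm (inv_into (range (blinfun_apply (id_blinfun - Pis (Theta \<theta> (- int t) (Theta \<theta> (m + int t) \<omega>)))))
                 (blinfun_apply (gen_by \<theta> A t (Theta \<theta> (- int t) (Theta \<theta> (m + int t) \<omega>))))
                 (blinfun_apply (id_blinfun - Pis (Theta \<theta> (m + int t) \<omega>)) x))
          \<le> K (Theta \<theta> (m + int t) \<omega>) * exp (\<alpha> (Theta \<theta> (m + int t) \<omega>) * (- real t)) * norm x"
      using unA[OF om'[of "m + int t"]] by blast
    then show "norm (inv_into (range (blinfun_apply (id_blinfun - Pis (Theta \<theta> m \<omega>)))) (blinfun_apply (ev (\<lambda>k. A (Theta \<theta> k \<omega>)) m t))
             (blinfun_apply (id_blinfun - Pis (Theta \<theta> (m + int t) \<omega>)) x)) \<le> K \<omega> * exp (- \<alpha> \<omega> * real t) * norm x"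
      by (simp only: TT2 ge inv_Theta[OF Ki] inv_Theta[OF ai]) (simp add: algebra_simps)
  qed
qed



lemma Vplus_eq: assumes rf: "random_flow M \<theta>"
  shows "Vplus (gen_by \<theta> Ca) \<omega> = VP (\<lambda>k. Ca (Theta \<theta> k \<omega>))"
proof -
  have "gen_by \<theta> Ca n \<omega> = ev (\<lambda>k. Ca (Theta \<theta> k \<omega>)) 0 n" for n
    using gen_ev[OF rf, of Ca n 0 \<omega>] Theta_0[OF rf, of \<omega>] by simp
  then show ?thesis by (simp add: Vplus_def VP_def)
qed

lemma bbs_eq: assumes rf: "random_flow M \<theta>"
  shows "backwards_bounded_solution \<theta> (gen_by \<theta> Ca) \<omega> z \<xi> \<longleftrightarrow> bs (\<lambda>k. Ca (Theta \<theta> k \<omega>)) z \<xi>"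
proof -
  have ge: "gen_by \<theta> Ca t (Theta \<theta> m \<omega>) = ev (\<lambda>k. Ca (Theta \<theta> k \<omega>)) m t" for t m by (rule gen_ev[OF rf])
  show ?thesis
  proof
    assume a: "backwards_bounded_solution \<theta> (gen_by \<theta> Ca) \<omega> z \<xi>"
    then have ev: "\<And>m n. m \<le> n \<Longrightarrow> n \<le> 0 \<Longrightarrow> \<xi> n = blinfun_apply (ev (\<lambda>k. Ca (Theta \<theta> k \<omega>)) m (nat (n - m))) (\<xi> m)"
      unfolding backwards_bounded_solution_def ge by blast
    show "bs (\<lambda>k. Ca (Theta \<theta> k \<omega>)) z \<xi>"
      unfolding bs_def
    proof (intro conjI allI impI)
      show "\<xi> 0 = z" using a by (simp add: backwards_bounded_solution_def)
      fix k :: int assume "k < 0"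
      then have "\<xi> (k + 1) = blinfun_apply (ev (\<lambda>k. Ca (Theta \<theta> k \<omega>)) k (nat (k + 1 - k))) (\<xi> k)"
        by (intro ev) auto
      then show "\<xi> (k + 1) = blinfun_apply (Ca (Theta \<theta> k \<omega>)) (\<xi> k)" by simp
    next
      show "\<exists>M. \<forall>k\<le>0. norm (\<xi> k) \<le> M" using a by (simp add: backwards_bounded_solution_def)
    qed
  next
    assume b: "bs (\<lambda>k. Ca (Theta \<theta> k \<omega>)) z \<xi>"
    have st: "\<And>k. k < 0 \<Longrightarrow> \<xi> (k + 1) = blinfun_apply (Ca (Theta \<theta> k \<omega>)) (\<xi> k)" using b by (simp add: bs_def)
    have "\<xi> n = blinfun_apply (ev (\<lambda>k. Ca (Theta \<theta> k \<omega>)) m (nat (n - m))) (\<xi> m)" if "m \<le> n" "n \<le> 0" for m n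
    proof -
      have "\<xi> (m + int (nat (n - m))) = blinfun_apply (ev (\<lambda>k. Ca (Theta \<theta> k \<omega>)) m (nat (n - m))) (\<xi> m)"
        by (rule steps_ev) (rule st, use that in simp)
      then show ?thesis using that by simp
    qed
    then show "backwards_bounded_solution \<theta> (gen_by \<theta> Ca) \<omega> z \<xi>"
      using b unfolding backwards_bounded_solution_def bs_def ge by blast
  qed
qed

lemma Vminus_eq: assumes rf: "random_flow M \<theta>"
  shows "Vminus \<theta> (gen_by \<theta> Ca) \<omega> = VM (\<lambda>k. Ca (Theta \<theta> k \<omega>))"
  unfolding Vminus_def VM_def bbs_eq[OF rf] ..

lemma shift_fun: assumes rf: "random_flow M \<theta>"
  shows "(\<lambda>k. Ca (Theta \<theta> k (Theta \<theta> (int n) \<omega>))) = (\<lambda>k. Ca (Theta \<theta> k \<omega>)) o (\<lambda>k. k + int n)"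
  using Theta_add[OF rf] by (auto simp: fun_eq_iff)

lemma pert_inst:
  assumes rf: "random_flow M \<theta>"
    and ed: "exp_dichotomy M \<theta> (gen_by \<theta> A) K \<alpha> Om Pis"
    and om: "snd \<omega> \<in> Om"
    and Bb: "\<And>k. norm (B (Theta \<theta> k \<omega>)) \<le> \<delta> / K \<omega>"
    and \<delta>: "\<delta> = (1 - exp (- \<alpha> \<omega>)) / (2 * (1 + exp (- \<alpha> \<omega>)))"
  shows "pert (\<lambda>k. A (Theta \<theta> k \<omega>)) (\<lambda>k. Pis (Theta \<theta> k \<omega>)) (K \<omega>) (\<alpha> \<omega>) (\<lambda>k. B (Theta \<theta> k \<omega>)) (\<delta> / K \<omega>)"
proof -
  interpret d: dich "\<lambda>k. A (Theta \<theta> k \<omega>)" "\<lambda>k. Pis (Theta \<theta> k \<omega>)" "K \<omega>" "\<alpha> \<omega>"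
    by (rule dich_inst[OF rf ed om])
  have e: "d.e = exp (- \<alpha> \<omega>)" by (simp add: d.e_def)
  have K0: "K \<omega> > 0" using d.K1 by simp
  have el: "exp (- \<alpha> \<omega>) < 1" using d.apos by simp
  have ep: "exp (- \<alpha> \<omega>) > 0" by simp
  have d0: "\<delta> \<ge> 0" using el ep unfolding \<delta> by simp
  have "\<delta> / K \<omega> * d.c = 1 / 2"
  proof -
    have xx: "exp (- \<alpha> \<omega>) * exp (- \<alpha> \<omega>) < 1 * 1"
      using el ep by (intro mult_strict_mono) auto
    show ?thesis unfolding d.c_def e \<delta> using K0 el ep xx by (simp add: field_simps)
  qed
  then show ?thesis
    by unfold_locales (use Bb d0 K0 in auto)
qed



lemma main_point:
  fixes A B :: "int \<times> 'w \<Rightarrow> ('x::banach \<Rightarrow>\<^sub>L 'x)"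
  assumes rf: "random_flow M \<theta>"
    and ed: "exp_dichotomy M \<theta> (gen_by \<theta> A) K \<alpha> Om Pis"
    and om: "snd \<omega> \<in> Om"
    and Bb: "\<And>\<omega>p k. norm (B (Theta \<theta> k \<omega>p)) \<le> \<delta> \<omega>p / K \<omega>p"
    and \<delta>: "\<And>\<omega>. \<delta> \<omega> = (1 - exp (- \<alpha> \<omega>)) / (2 * (1 + exp (- \<alpha> \<omega>)))"
  defines "\<psi> \<equiv> gen_by \<theta> (\<lambda>\<omega>p. A \<omega>p + B \<omega>p)"
  shows "closed (Vplus \<psi> \<omega>) \<and> subspace (Vplus \<psi> \<omega>) \<and>
           closed (Vminus \<theta> \<psi> \<omega>) \<and> subspace (Vminus \<theta> \<psi> \<omega>) \<and>
           direct_sum (Vplus \<psi> \<omega>) (Vminus \<theta> \<psi> \<omega>) \<and>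
           (\<forall>n. blinfun_apply (\<psi> n \<omega>) ` Vplus \<psi> \<omega> \<subseteq> Vplus \<psi> (Theta \<theta> (int n) \<omega>) \<and>
                blinfun_apply (\<psi> n \<omega>) ` Vminus \<theta> \<psi> \<omega> = Vminus \<theta> \<psi> (Theta \<theta> (int n) \<omega>) \<and>
                iso_between (\<psi> n \<omega>) (Vminus \<theta> \<psi> \<omega>) (Vminus \<theta> \<psi> (Theta \<theta> (int n) \<omega>)))"
proof -
  have inv: "theta_invariant_set \<theta> Om" using ed unfolding exp_dichotomy_def by blast
  define C where "C = (\<lambda>k. A (Theta \<theta> k \<omega>) + B (Theta \<theta> k \<omega>))"
  interpret pw: pert "\<lambda>k. A (Theta \<theta> k \<omega>)" "\<lambda>k. Pis (Theta \<theta> k \<omega>)" "K \<omega>" "\<alpha> \<omega>" "\<lambda>k. B (Theta \<theta> k \<omega>)" "\<delta> \<omega> / K \<omega>"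
    by (rule pert_inst[where B=B and \<delta>="\<delta> \<omega>", OF rf ed om Bb[where \<omega>p=\<omega>] \<delta>[of \<omega>]])
  have Cn: "pw.Cn = C" unfolding C_def by (rule pw.Cn_eq)
  have Vp: "Vplus \<psi> \<omega> = VP C" unfolding \<psi>_def C_def by (rule Vplus_eq[OF rf])
  have Vm: "Vminus \<theta> \<psi> \<omega> = VM C" unfolding \<psi>_def C_def by (rule Vminus_eq[OF rf])
  have psi_ev: "\<psi> n \<omega> = ev C 0 n" for n
    using gen_ev[OF rf, of "\<lambda>\<omega>p. A \<omega>p + B \<omega>p" n 0 \<omega>] Theta_0[OF rf, of \<omega>] unfolding \<psi>_def C_def by simp
  have inter: "\<And>z. z \<in> VP C \<Longrightarrow> z \<in> VM C \<Longrightarrow> z = 0" using pw.inter unfolding Cn .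
  have part1: "closed (Vplus \<psi> \<omega>) \<and> subspace (Vplus \<psi> \<omega>) \<and>
           closed (Vminus \<theta> \<psi> \<omega>) \<and> subspace (Vminus \<theta> \<psi> \<omega>) \<and>
           direct_sum (Vplus \<psi> \<omega>) (Vminus \<theta> \<psi> \<omega>)"
  proof -
    have "closed (VP C)" using pw.VP_closed unfolding Cn .
    moreover have "closed (VM C)" using pw.VM_closed unfolding Cn .
    moreover have "direct_sum (VP C) (VM C)" using pw.dsum unfolding Cn .
    ultimately show ?thesis unfolding Vp Vm using VP_subspace[of C] VM_subspace[of C] by (intro conjI)
  qed
  have part2: "blinfun_apply (\<psi> n \<omega>) ` Vplus \<psi> \<omega> \<subseteq> Vplus \<psi> (Theta \<theta> (int n) \<omega>) \<and>
                blinfun_apply (\<psi> n \<omega>) ` Vminus \<theta> \<psi> \<omega> = Vminus \<theta> \<psi> (Theta \<theta> (int n) \<omega>) \<and>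
                iso_between (\<psi> n \<omega>) (Vminus \<theta> \<psi> \<omega>) (Vminus \<theta> \<psi> (Theta \<theta> (int n) \<omega>))" for n
  proof -
    define \<omega>1 where "\<omega>1 = Theta \<theta> (int n) \<omega>"
    have om1: "snd \<omega>1 \<in> Om" unfolding \<omega>1_def by (rule Om_inv[OF inv om])
    define C1 where "C1 = (\<lambda>k. A (Theta \<theta> k \<omega>1) + B (Theta \<theta> k \<omega>1))"
    have C1: "C1 = (\<lambda>k. C (k + int n))"
      using shift_fun[OF rf, of "\<lambda>\<omega>p. A \<omega>p + B \<omega>p" n \<omega>] unfolding C1_def C_def \<omega>1_def by (simp add: o_def)
    have Vp1: "Vplus \<psi> \<omega>1 = VP (\<lambda>k. C (k + int n))" unfolding \<psi>_def C1[symmetric] C1_def by (rule Vplus_eq[OF rf])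
    have Vm1: "Vminus \<theta> \<psi> \<omega>1 = VM (\<lambda>k. C (k + int n))" unfolding \<psi>_def C1[symmetric] C1_def by (rule Vminus_eq[OF rf])
    interpret p1: pert "\<lambda>k. A (Theta \<theta> k \<omega>1)" "\<lambda>k. Pis (Theta \<theta> k \<omega>1)" "K \<omega>1" "\<alpha> \<omega>1" "\<lambda>k. B (Theta \<theta> k \<omega>1)" "\<delta> \<omega>1 / K \<omega>1"
      by (rule pert_inst[where B=B and \<delta>="\<delta> \<omega>1", OF rf ed om1 Bb[where \<omega>p=\<omega>1] \<delta>[of \<omega>1]])
    have Cn1: "p1.Cn = (\<lambda>k. C (k + int n))" unfolding C1[symmetric] C1_def by (rule p1.Cn_eq)
    have s1: "blinfun_apply (ev C 0 n) ` VP C \<subseteq> VP (\<lambda>k. C (k + int n))" using VP_shift by blast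
    have s2: "blinfun_apply (ev C 0 n) ` VM C = VM (\<lambda>k. C (k + int n))" by (rule VM_shift)
    have ij: "inj_on (blinfun_apply (ev C 0 n)) (VM C)" by (rule VM_inj[OF inter])
    define g where "g z = (if n = 0 then z else - p1.Wsol z (- int n))" for z
    have gc: "continuous_on UNIV g"
    proof (cases "n = 0")
      case True then show ?thesis by (simp add: g_def continuous_on_id)
    next
      case False
      have "continuous_on UNIV (\<lambda>z. - p1.Wsol z (- int n))"
        by (intro continuous_on_minus p1.a_cont)
      then show ?thesis using False by (simp add: g_def)
    qed
    have ginv: "inv_into (VM C) (blinfun_apply (ev C 0 n)) z = g z" if z: "z \<in> VM (\<lambda>k. C (k + int n))" for z
    proof -
      have "bs (\<lambda>k. C (k + int n)) z (\<lambda>k. if k < 0 then - p1.Wsol z k else z)"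
        using p1.VM_bs[of z] z unfolding Cn1 by blast
      from VM_shift2[OF this] have y: "g z \<in> VM C" "blinfun_apply (ev C 0 n) (g z) = z"
        by (auto simp: g_def split: if_splits)
      show ?thesis using inv_into_f_f[OF ij y(1)] y(2) by simp
    qed
    have iso: "iso_between (ev C 0 n) (VM C) (VM (\<lambda>k. C (k + int n)))"
      unfolding iso_between_def
    proof
      show "bij_betw (blinfun_apply (ev C 0 n)) (VM C) (VM (\<lambda>k. C (k + int n)))"
        using ij s2 by (simp add: bij_betw_def)
      have cg: "continuous_on (VM (\<lambda>k. C (k + int n))) g" by (rule continuous_on_subset[OF gc subset_UNIV])
      have eq: "continuous_on (VM (\<lambda>k. C (k + int n))) (inv_into (VM C) (blinfun_apply (ev C 0 n)))
          = continuous_on (VM (\<lambda>k. C (k + int n))) g"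
        by (rule continuous_on_cong[OF refl]) (rule ginv)
      show "continuous_on (VM (\<lambda>k. C (k + int n))) (inv_into (VM C) (blinfun_apply (ev C 0 n)))"
        using cg eq by (simp only:)
    qed
    show ?thesis
      unfolding psi_ev Vp Vm \<omega>1_def[symmetric] Vp1 Vm1 using s1 s2 iso by (intro conjI)
  qed
  show ?thesis using part1 part2 by (intro conjI allI) simp_all
qed



lemma half_lt_aux: "(x::real) = t / 2 \<Longrightarrow> 0 < t \<Longrightarrow> x < t" by simp

theorem mainTheorem3:
  fixes M :: "'w measure" and \<theta> :: "int \<Rightarrow> 'w \<Rightarrow> 'w"
    and A :: "int \<times> 'w \<Rightarrow> ('x::banach \<Rightarrow>\<^sub>L 'x)"
    and \<phi> :: "nat \<Rightarrow> int \<times> 'w \<Rightarrow> ('x \<Rightarrow>\<^sub>L 'x)"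
    and K \<alpha> :: "int \<times> 'w \<Rightarrow> real" and Om :: "'w set"
    and Pis :: "int \<times> 'w \<Rightarrow> ('x \<Rightarrow>\<^sub>L 'x)"
  assumes "prob_space M"
    and "random_flow M \<theta>"
    and "linear_cocycle M \<theta> \<phi>"
    and "generated_by \<theta> A \<phi>"
    and "exp_dichotomy M \<theta> \<phi> K \<alpha> Om Pis"
  shows "\<exists>\<delta> :: int \<times> 'w \<Rightarrow> real. Theta_invariant \<theta> \<delta> \<and>
     (\<forall>\<omega>p. 0 < \<delta> \<omega>p \<and> \<delta> \<omega>p < (1 - exp (- \<alpha> \<omega>p)) / (1 + exp (- \<alpha> \<omega>p))) \<and>
     (\<forall>B :: int \<times> 'w \<Rightarrow> ('x \<Rightarrow>\<^sub>L 'x).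
        (\<forall>\<omega>p k. norm (B (Theta \<theta> k \<omega>p)) \<le> \<delta> \<omega>p / K \<omega>p) \<longrightarrow>
        linear_cocycle M \<theta> (gen_by \<theta> (\<lambda>\<omega>p. A \<omega>p + B \<omega>p)) \<longrightarrow>
        (let \<psi> = gen_by \<theta> (\<lambda>\<omega>p. A \<omega>p + B \<omega>p) in
         \<forall>\<omega>p. snd \<omega>p \<in> Om \<longrightarrow>
           closed (Vplus \<psi> \<omega>p) \<and> subspace (Vplus \<psi> \<omega>p) \<and>
           closed (Vminus \<theta> \<psi> \<omega>p) \<and> subspace (Vminus \<theta> \<psi> \<omega>p) \<and>
           direct_sum (Vplus \<psi> \<omega>p) (Vminus \<theta> \<psi> \<omega>p) \<and>
           (\<forall>n. blinfun_apply (\<psi> n \<omega>p) ` Vplus \<psi> \<omega>p \<subseteq> Vplus \<psi> (Theta \<theta> (int n) \<omega>p) \<and>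
                blinfun_apply (\<psi> n \<omega>p) ` Vminus \<theta> \<psi> \<omega>p = Vminus \<theta> \<psi> (Theta \<theta> (int n) \<omega>p) \<and>
                iso_between (\<psi> n \<omega>p) (Vminus \<theta> \<psi> \<omega>p) (Vminus \<theta> \<psi> (Theta \<theta> (int n) \<omega>p)))))"
proof -
  note rf = assms(2)
  have phi: "\<phi> = gen_by \<theta> A" by (rule phi_gen[OF assms(3,4)])
  have ed: "exp_dichotomy M \<theta> (gen_by \<theta> A) K \<alpha> Om Pis" using assms(5) unfolding phi .
  have ai: "Theta_invariant \<theta> \<alpha>" using ed unfolding exp_dichotomy_def by blast
  have apos: "\<And>\<omega>. \<alpha> \<omega> > 0" using ed unfolding exp_dichotomy_def by blast
  define \<delta> where "\<delta> \<omega> = (1 - exp (- \<alpha> \<omega>)) / (2 * (1 + exp (- \<alpha> \<omega>)))" for \<omega>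
  show ?thesis
  proof (intro exI[of _ \<delta>] conjI allI impI)
    show "Theta_invariant \<theta> \<delta>"
      unfolding Theta_invariant_def \<delta>_def using inv_Theta[OF ai] by simp
  next
    fix \<omega>p
    have el: "exp (- \<alpha> \<omega>p) < 1" using apos[of \<omega>p] by simp
    have ep: "exp (- \<alpha> \<omega>p) > 0" by simp
    have "0 < 1 - exp (- \<alpha> \<omega>p)" "0 < 2 * (1 + exp (- \<alpha> \<omega>p))" using el ep by (smt (verit))+
    then show "0 < \<delta> \<omega>p" unfolding \<delta>_def by (rule divide_pos_pos)
    have "(1 - exp (- \<alpha> \<omega>p)) / (2 * (1 + exp (- \<alpha> \<omega>p))) < (1 - exp (- \<alpha> \<omega>p)) / (1 + exp (- \<alpha> \<omega>p))"
    proof -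
      have p: "0 < (1 - exp (- \<alpha> \<omega>p)) / (1 + exp (- \<alpha> \<omega>p))"
        using el ep by (intro divide_pos_pos) (smt (verit))+
      have "(1 - exp (- \<alpha> \<omega>p)) / (2 * (1 + exp (- \<alpha> \<omega>p))) = ((1 - exp (- \<alpha> \<omega>p)) / (1 + exp (- \<alpha> \<omega>p))) / 2"
        by simp
      then show ?thesis using p half_lt_aux by blast
    qed
    then show "\<delta> \<omega>p < (1 - exp (- \<alpha> \<omega>p)) / (1 + exp (- \<alpha> \<omega>p))" unfolding \<delta>_def .
  next
    fix B :: "int \<times> 'w \<Rightarrow> ('x \<Rightarrow>\<^sub>L 'x)"
    assume Bb: "\<forall>\<omega>p k. norm (B (Theta \<theta> k \<omega>p)) \<le> \<delta> \<omega>p / K \<omega>p"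
    show "let \<psi> = gen_by \<theta> (\<lambda>\<omega>p. A \<omega>p + B \<omega>p) in
         \<forall>\<omega>p. snd \<omega>p \<in> Om \<longrightarrow>
           closed (Vplus \<psi> \<omega>p) \<and> subspace (Vplus \<psi> \<omega>p) \<and>
           closed (Vminus \<theta> \<psi> \<omega>p) \<and> subspace (Vminus \<theta> \<psi> \<omega>p) \<and>
           direct_sum (Vplus \<psi> \<omega>p) (Vminus \<theta> \<psi> \<omega>p) \<and>
           (\<forall>n. blinfun_apply (\<psi> n \<omega>p) ` Vplus \<psi> \<omega>p \<subseteq> Vplus \<psi> (Theta \<theta> (int n) \<omega>p) \<and>
                blinfun_apply (\<psi> n \<omega>p) ` Vminus \<theta> \<psi> \<omega>p = Vminus \<theta> \<psi> (Theta \<theta> (int n) \<omega>p) \<and>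
                iso_between (\<psi> n \<omega>p) (Vminus \<theta> \<psi> \<omega>p) (Vminus \<theta> \<psi> (Theta \<theta> (int n) \<omega>p)))"
      unfolding Let_def
    proof (intro allI impI)
      fix \<omega> :: "int \<times> 'w" assume om: "snd \<omega> \<in> Om"
      have Bb': "\<And>\<omega>p k. norm (B (Theta \<theta> k \<omega>p)) \<le> \<delta> \<omega>p / K \<omega>p" using Bb by blast
      show "closed (Vplus (gen_by \<theta> (\<lambda>\<omega>p. A \<omega>p + B \<omega>p)) \<omega>) \<and> subspace (Vplus (gen_by \<theta> (\<lambda>\<omega>p. A \<omega>p + B \<omega>p)) \<omega>) \<and>
           closed (Vminus \<theta> (gen_by \<theta> (\<lambda>\<omega>p. A \<omega>p + B \<omega>p)) \<omega>) \<and> subspace (Vminus \<theta> (gen_by \<theta> (\<lambda>\<omega>p. A \<omega>p + B \<omega>p)) \<omega>) \<and>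
           direct_sum (Vplus (gen_by \<theta> (\<lambda>\<omega>p. A \<omega>p + B \<omega>p)) \<omega>) (Vminus \<theta> (gen_by \<theta> (\<lambda>\<omega>p. A \<omega>p + B \<omega>p)) \<omega>) \<and>
           (\<forall>n. blinfun_apply (gen_by \<theta> (\<lambda>\<omega>p. A \<omega>p + B \<omega>p) n \<omega>) ` Vplus (gen_by \<theta> (\<lambda>\<omega>p. A \<omega>p + B \<omega>p)) \<omega> \<subseteq> Vplus (gen_by \<theta> (\<lambda>\<omega>p. A \<omega>p + B \<omega>p)) (Theta \<theta> (int n) \<omega>) \<and>
                blinfun_apply (gen_by \<theta> (\<lambda>\<omega>p. A \<omega>p + B \<omega>p) n \<omega>) ` Vminus \<theta> (gen_by \<theta> (\<lambda>\<omega>p. A \<omega>p + B \<omega>p)) \<omega> = Vminus \<theta> (gen_by \<theta> (\<lambda>\<omega>p. A \<omega>p + B \<omega>p)) (Theta \<theta> (int n) \<omega>) \<and>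
                iso_between (gen_by \<theta> (\<lambda>\<omega>p. A \<omega>p + B \<omega>p) n \<omega>) (Vminus \<theta> (gen_by \<theta> (\<lambda>\<omega>p. A \<omega>p + B \<omega>p)) \<omega>) (Vminus \<theta> (gen_by \<theta> (\<lambda>\<omega>p. A \<omega>p + B \<omega>p)) (Theta \<theta> (int n) \<omega>)))"
        by (rule main_point[OF rf ed om Bb' \<delta>_def])
    qed
  qed
qed


end
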